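(* For every $\alpha>1$ there exists a $1$-stable $c_\alpha$-approximation algorithm for the dynamic broadcast range-assignment problem in $\mathbb{R}^1$ with insertions only, where the approximation ratio $c_\alpha$ depends only on the distance-power gradient $\alpha$. For $\alpha=2$ the approximation ratio is $c_2=2(3+\sqrt5)\approx 10.47$.
   Context: A range assignment $\rho$ on a finite set $P\subset\mathbb{R}^1$ containing a source $s$ induces a directed graph with edge $(p,q)$ iff $|pq|\le\rho(p)$; it is feasible if the graph contains an arborescence rooted at $s$ spanning $P$; its cost is $\sum_p\rho(p)^\alpha$; $\mathrm{OPT}(P)$ is the minimum cost. In the insertion-only dynamic version, starting from $P=\{s\}$, points are inserted one at a time, and an update algorithm outputs a feasible assignment for the new set after each insertion; a point not yet in the set has range $0$. The algorithm is $1$-stable if each insertion modifies at most one range, and is a $c$-approximation if after every insertion its cost is at most $c\cdot\mathrm{OPT}(P)$. *)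

theory Defs
  imports Complex_Main
begin

definition range_assignment :: "real set \<Rightarrow> (real \<Rightarrow> real) \<Rightarrow> bool" where
  "range_assignment P \<rho> \<longleftrightarrow> (\<forall>p. 0 \<le> \<rho> p) \<and> (\<forall>p. p \<notin> P \<longrightarrow> \<rho> p = 0)"

definition induced_edges :: "real set \<Rightarrow> (real \<Rightarrow> real) \<Rightarrow> (real \<times> real) set" where
  "induced_edges P \<rho> = {(p, q). p \<in> P \<and> q \<in> P \<and> \<bar>p - q\<bar> \<le> \<rho> p}"

(* The induced graph contains an arborescence rooted at s spanning P
   iff every point of P is reachable from s. *)
definition feasible :: "real \<Rightarrow> real set \<Rightarrow> (real \<Rightarrow> real) \<Rightarrow> bool" where
  "feasible s P \<rho> \<longleftrightarrow> range_assignment P \<rho> \<and> s \<in> P \<and>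
     (\<forall>q\<in>P. (s, q) \<in> (induced_edges P \<rho>)\<^sup>*)"

definition cost :: "real \<Rightarrow> real set \<Rightarrow> (real \<Rightarrow> real) \<Rightarrow> real" where
  "cost \<alpha> P \<rho> = (\<Sum>p\<in>P. \<rho> p powr \<alpha>)"

definition OPT :: "real \<Rightarrow> real \<Rightarrow> real set \<Rightarrow> real" where
  "OPT \<alpha> s P = Inf {cost \<alpha> P \<rho> | \<rho>. feasible s P \<rho>}"

(* An insertion-only dynamic update algorithm: given the source s and the
   sequence of points inserted so far (in order), it outputs the current
   range assignment.  It is online by construction (it only sees the prefix). *)
type_synonym algorithm = "real \<Rightarrow> real list \<Rightarrow> (real \<Rightarrow> real)"

definition valid_insertion_seq :: "real \<Rightarrow> real list \<Rightarrow> bool" where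
  "valid_insertion_seq s xs \<longleftrightarrow> distinct (s # xs)"

definition stable_approx :: "real \<Rightarrow> real \<Rightarrow> algorithm \<Rightarrow> bool" where
  "stable_approx \<alpha> c A \<longleftrightarrow>
     (\<forall>s xs. valid_insertion_seq s xs \<longrightarrow>
        feasible s (insert s (set xs)) (A s xs) \<and>
        cost \<alpha> (insert s (set xs)) (A s xs) \<le> c * OPT \<alpha> s (insert s (set xs))) \<and>
     (\<forall>s xs x. valid_insertion_seq s (xs @ [x]) \<longrightarrow>
        card {p. A s (xs @ [x]) p \<noteq> A s xs p} \<le> 1)"

end

theory Submission
  imports Defs
begin

definition nx :: "real set \<Rightarrow> real \<Rightarrow> real" where
  "nx D p = Min {q\<in>D. p < q}"

definition cnt :: "real set \<Rightarrow> real \<Rightarrow> real \<Rightarrow> nat" where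
  "cnt D a b = card {p\<in>D. a \<le> p \<and> p < b}"

type_synonym state = "real set \<times> real set \<times> (real \<Rightarrow> real)"

definition med :: "real set \<Rightarrow> real \<Rightarrow> real \<Rightarrow> real" where
  "med D u t = Max {p\<in>D. u < p \<and> p < t \<and> card {q\<in>D. u < q \<and> q < p} \<le> 1}"

definition step :: "real \<Rightarrow> state \<Rightarrow> state" where
  "step x st = (case st of (D, Ld, tg) \<Rightarrow>
     if Max D < x then (insert x D, insert x Ld, tg(Max D := x))
     else (let u = Max {v\<in>Ld. v < x}; t = tg u in
       if (\<exists>c\<in>D. u < c \<and> c < t \<and> tg c \<noteq> c)
       then (let c = (SOME c. c\<in>D \<and> u < c \<and> c < t \<and> tg c \<noteq> c) in (insert x D, insert c Ld, tg(u := c)))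
       else (let c = med (insert x D) u t in (insert x D, Ld, tg(c := t)))))"

definition run :: "real list \<Rightarrow> state" where
  "run ys = foldl (\<lambda>st x. step x st) ({0}, {0}, id) ys"

definition blk :: "real set \<Rightarrow> (real \<Rightarrow> real) \<Rightarrow> real \<Rightarrow> bool" where
  "blk D tg u \<longleftrightarrow>
     ((\<forall>p\<in>D. u < p \<and> p < tg u \<longrightarrow> tg p = p) \<and> cnt D u (tg u) \<le> 3) \<or>
     (\<exists>c\<in>D. u < c \<and> c < tg u \<and> tg c = tg u \<and> (\<forall>p\<in>D. u < p \<and> p < tg u \<and> p \<noteq> c \<longrightarrow> tg p = p)
        \<and> cnt D u c \<le> 2 \<and> cnt D c (tg u) \<le> 2)"

definition Inv :: "state \<Rightarrow> bool" where
  "Inv st = (case st of (D, Ld, tg) \<Rightarrow>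
     finite D \<and> 0 \<in> D \<and> (\<forall>p\<in>D. 0 \<le> p) \<and> Ld \<subseteq> D \<and> 0 \<in> Ld \<and> Max D \<in> Ld \<and>
     (\<forall>p. p \<notin> D \<longrightarrow> tg p = p) \<and> tg (Max D) = Max D \<and>
     (\<forall>u\<in>Ld. u \<noteq> Max D \<longrightarrow> u < tg u \<and> tg u \<in> Ld \<and> (\<forall>v\<in>Ld. \<not> (u < v \<and> v < tg u))) \<and>
     (\<forall>u\<in>Ld. u \<noteq> Max D \<longrightarrow> blk D tg u))"

lemma run_snoc: "run (ys @ [y]) = step y (run ys)"
  by (simp add: run_def)

lemma Inv_init: "Inv ({0}, {0}, id)"
  by (simp add: Inv_def)

lemma fst_run: "fst (run ys) = insert 0 (set ys)"
proof (induction ys rule: rev_induct)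
  case Nil then show ?case by (simp add: run_def)
next
  case (snoc y ys)
  obtain D Ld tg where r: "run ys = (D, Ld, tg)" by (cases "run ys") auto
  show ?case using snoc r by (auto simp: run_snoc step_def Let_def)
qed

lemma step_change: "\<exists>q v. snd (snd (step x st)) = (snd (snd st))(q := v)"
proof -
  obtain D Ld tg where r: "st = (D, Ld, tg)" by (cases st) auto
  show ?thesis unfolding r step_def Let_def by (auto split: if_splits)
qed

lemma InvD:
  assumes "Inv (D, Ld, tg)"
  shows "finite D" "0 \<in> D" "\<And>p. p \<in> D \<Longrightarrow> 0 \<le> p" "Ld \<subseteq> D" "0 \<in> Ld" "Max D \<in> Ld"
    "\<And>p. p \<notin> D \<Longrightarrow> tg p = p" "tg (Max D) = Max D"
    "\<And>u. u \<in> Ld \<Longrightarrow> u \<noteq> Max D \<Longrightarrow> u < tg u"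
    "\<And>u. u \<in> Ld \<Longrightarrow> u \<noteq> Max D \<Longrightarrow> tg u \<in> Ld"
    "\<And>u v. u \<in> Ld \<Longrightarrow> u \<noteq> Max D \<Longrightarrow> v \<in> Ld \<Longrightarrow> u < v \<Longrightarrow> tg u \<le> v"
    "\<And>u. u \<in> Ld \<Longrightarrow> u \<noteq> Max D \<Longrightarrow> blk D tg u"
  using assms unfolding Inv_def by (auto simp: not_less) (meson leD)

lemma Inv_Max_ge:
  assumes "Inv (D, Ld, tg)" "p \<in> D" shows "p \<le> Max D"
  using InvD(1)[OF assms(1)] assms(2) by simp

lemma Ld_finite:
  assumes "Inv (D, Ld, tg)" shows "finite Ld"
  using InvD(1,4)[OF assms] finite_subset by blast

lemma leader_find:
  assumes I: "Inv (D, Ld, tg)" and x: "0 < x" "x \<le> Max D" "x \<notin> Ld"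
  defines "u \<equiv> Max {v\<in>Ld. v < x}"
  shows "u \<in> Ld" "u < x" "u \<noteq> Max D" "x < tg u" "\<And>v. v \<in> Ld \<Longrightarrow> v < x \<Longrightarrow> v \<le> u"
proof -
  have fin: "finite {v\<in>Ld. v < x}" using Ld_finite[OF I] by simp
  have ne: "0 \<in> {v\<in>Ld. v < x}" using InvD(5)[OF I] x by simp
  have uin: "u \<in> {v\<in>Ld. v < x}" unfolding u_def using fin ne Max_in by blast
  then show "u \<in> Ld" "u < x" by auto
  then show un: "u \<noteq> Max D" using x by auto
  show ub: "\<And>v. v \<in> Ld \<Longrightarrow> v < x \<Longrightarrow> v \<le> u" unfolding u_def using fin by simp
  have "tg u \<in> Ld" "u < tg u" using InvD(9,10)[OF I \<open>u \<in> Ld\<close> un] by auto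
  moreover have "tg u \<noteq> x" using \<open>tg u \<in> Ld\<close> x by auto
  ultimately show "x < tg u" using ub[of "tg u"] by force
qed

lemma blocks_disj:
  assumes I: "Inv (D, Ld, tg)" and u: "u \<in> Ld" "u \<noteq> Max D" and v: "v \<in> Ld" "v \<noteq> Max D"
    and uv: "u \<noteq> v" and p: "u < p" "p < tg u"
  shows "\<not> (v < p \<and> p < tg v)"
proof
  assume vp: "v < p \<and> p < tg v"
  show False
  proof (cases "u < v")
    case True
    then have "tg u \<le> v" using InvD(11)[OF I u v(1)] by simp
    then show ?thesis using vp p by simp
  next
    case False
    then have "v < u" using uv by simp
    then have "tg v \<le> u" using InvD(11)[OF I v u(1)] by simp
    then show ?thesis using vp p by simp
  qed
qed

lemma cnt_mono_set: "finite D \<Longrightarrow> {p\<in>D. a \<le> p \<and> p < b} = {p\<in>D'. a \<le> p \<and> p < b} \<Longrightarrow> cnt D a b = cnt D' a b"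
  by (simp add: cnt_def)

lemma Inv_caseA:
  assumes I: "Inv (D, Ld, tg)" and x: "x \<notin> D" "Max D < x"
  shows "Inv (insert x D, insert x Ld, tg(Max D := x))"
proof -
  let ?m = "Max D"
  let ?tg = "tg(?m := x)"
  have fin: "finite D" and D0: "0 \<in> D" using InvD[OF I] by auto
  have Mx: "Max (insert x D) = x" using fin D0 x by (subst Max_insert) (auto simp: max_def)
  have ge: "\<And>p. p \<in> D \<Longrightarrow> p \<le> ?m" using Inv_Max_ge[OF I] by blast
  have mD: "?m \<in> D" using fin D0 Max_in by blast
  have tgle: "\<And>u. u \<in> Ld \<Longrightarrow> u \<noteq> ?m \<Longrightarrow> tg u \<le> ?m"
    using InvD(4,10)[OF I] ge by blast
  have ldle: "\<And>u. u \<in> Ld \<Longrightarrow> u \<le> ?m" using InvD(4)[OF I] ge by blast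
  have L1: "\<forall>u\<in>insert x Ld. u \<noteq> Max (insert x D) \<longrightarrow> u < ?tg u \<and> ?tg u \<in> insert x Ld \<and>
       (\<forall>v\<in>insert x Ld. \<not> (u < v \<and> v < ?tg u))"
  proof (intro ballI impI)
    fix u assume u: "u \<in> insert x Ld" "u \<noteq> Max (insert x D)"
    then have uL: "u \<in> Ld" using Mx by auto
    show "u < ?tg u \<and> ?tg u \<in> insert x Ld \<and> (\<forall>v\<in>insert x Ld. \<not> (u < v \<and> v < ?tg u))"
    proof (cases "u = ?m")
      case True
      then show ?thesis using x ldle by (auto dest: ldle simp: not_less)
    next
      case False
      then show ?thesis using InvD(9,10,11)[OF I uL] tgle[OF uL] x by (auto simp: not_less) (meson not_le)
    qed
  qed
  have L2: "\<forall>u\<in>insert x Ld. u \<noteq> Max (insert x D) \<longrightarrow> blk (insert x D) ?tg u"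
  proof (intro ballI impI)
    fix u assume u: "u \<in> insert x Ld" "u \<noteq> Max (insert x D)"
    then have uL: "u \<in> Ld" using Mx by auto
    show "blk (insert x D) ?tg u"
    proof (cases "u = ?m")
      case True
      have "{p\<in>insert x D. u \<le> p \<and> p < x} = {u}" using True ge mD x by (auto intro: order_antisym)
      then have "cnt (insert x D) u (?tg u) = 1" using True by (simp add: cnt_def)
      moreover have "\<forall>p\<in>insert x D. u < p \<and> p < ?tg u \<longrightarrow> ?tg p = p" using True ge by force
      ultimately show ?thesis unfolding blk_def by simp
    next
      case False
      have tu: "?tg u = tg u" using False by simp
      have tum: "tg u \<le> ?m" using tgle[OF uL False] .
      have B: "blk D tg u" using InvD(12)[OF I uL False] .
      have sets: "\<And>a. a \<le> tg u \<Longrightarrow> {p\<in>insert x D. a \<le> p \<and> p < tg u} = {p\<in>D. a \<le> p \<and> p < tg u}"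
        using x tum by auto
      have cnteq: "\<And>a. a \<le> tg u \<Longrightarrow> cnt (insert x D) a (tg u) = cnt D a (tg u)"
        using sets by (simp add: cnt_def)
      have cnteq2: "\<And>a c. c \<le> tg u \<Longrightarrow> cnt (insert x D) a c = cnt D a c"
      proof -
        fix a c assume "c \<le> tg u"
        then have "{p\<in>insert x D. a \<le> p \<and> p < c} = {p\<in>D. a \<le> p \<and> p < c}" using x tum by auto
        then show "cnt (insert x D) a c = cnt D a c" by (simp add: cnt_def)
      qed
      have tgin: "\<And>p. p < tg u \<Longrightarrow> ?tg p = tg p" using tum by auto
      from B consider (U) "(\<forall>p\<in>D. u < p \<and> p < tg u \<longrightarrow> tg p = p)" "cnt D u (tg u) \<le> 3"
        | (P) c where "c \<in> D" "u < c" "c < tg u" "tg c = tg u" "\<forall>p\<in>D. u < p \<and> p < tg u \<and> p \<noteq> c \<longrightarrow> tg p = p"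
           "cnt D u c \<le> 2" "cnt D c (tg u) \<le> 2"
        unfolding blk_def by blast
      then show ?thesis
      proof cases
        case U
        note a1 = U(1) and a2 = U(2)
        have "\<forall>p\<in>insert x D. u < p \<and> p < ?tg u \<longrightarrow> ?tg p = p"
          using a1 tgin tu x tum by auto
        moreover have "cnt (insert x D) u (?tg u) \<le> 3" using a2 cnteq2[of "tg u" u] tu by simp
        ultimately show "blk (insert x D) ?tg u" unfolding blk_def by blast
      next
        case (P c)
        note c = P(1-4) and a1 = P(5) and a2 = P(6-7)
        have "c \<in> insert x D \<and> u < c \<and> c < ?tg u \<and> ?tg c = ?tg u \<and> (\<forall>p\<in>insert x D. u < p \<and> p < ?tg u \<and> p \<noteq> c \<longrightarrow> ?tg p = p) \<and>
            cnt (insert x D) u c \<le> 2 \<and> cnt (insert x D) c (?tg u) \<le> 2"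
          using c a1 a2 tgin tu x tum cnteq2[of c u] cnteq2[of "tg u" c] by auto
        then show "blk (insert x D) ?tg u" unfolding blk_def by blast
      qed
    qed
  qed
  have x0: "0 \<le> x" using Inv_Max_ge[OF I D0] x by simp
  show ?thesis unfolding Inv_def
    using InvD[OF I] x Mx L1 L2 mD x0 by (auto simp: less_imp_le)
qed

lemma med_props:
  assumes fin: "finite D" and uD: "u \<in> D" and x: "x \<in> D" "u < x" "x < t"
    and card3: "card {p\<in>D. u < p \<and> p < t} \<le> 3"
  defines "c \<equiv> med D u t"
  shows "c \<in> D" "u < c" "c < t" "cnt D u c \<le> 2" "cnt D c t \<le> 2"
proof -
  let ?I = "{p\<in>D. u < p \<and> p < t}"
  let ?S = "{p\<in>D. u < p \<and> p < t \<and> card {q\<in>D. u < q \<and> q < p} \<le> 1}"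
  have finI: "finite ?I" using fin by simp
  have xI: "x \<in> ?I" using x by simp
  define m0 where "m0 = Min ?I"
  have m0I: "m0 \<in> ?I" unfolding m0_def using finI xI Min_in by blast
  have "{q\<in>D. u < q \<and> q < m0} = {}"
  proof (rule ccontr)
    assume "{q\<in>D. u < q \<and> q < m0} \<noteq> {}"
    then obtain q where q: "q \<in> D" "u < q" "q < m0" by auto
    then have "q \<in> ?I" using m0I by auto
    then have "m0 \<le> q" unfolding m0_def using finI by simp
    then show False using q by simp
  qed
  then have "card {q\<in>D. u < q \<and> q < m0} = 0" by (simp only: card.empty)
  then have m0S: "m0 \<in> ?S" using m0I by simp
  have finS: "finite ?S" using fin by simp
  have cS: "c \<in> ?S" unfolding c_def med_def using finS m0S Max_in by blast
  have cmax: "\<And>p. p \<in> ?S \<Longrightarrow> p \<le> c" unfolding c_def med_def using finS by simp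
  then show "c \<in> D" "u < c" "c < t" using cS by auto
  let ?J = "{q\<in>D. u < q \<and> q < c}"
  let ?K = "{p\<in>D. c \<le> p \<and> p < t}"
  have J1: "card ?J \<le> 1" using cS by simp
  have "{p\<in>D. u \<le> p \<and> p < c} = insert u ?J" using uD cS by auto
  then have "cnt D u c = card (insert u ?J)" by (simp add: cnt_def)
  also have "\<dots> \<le> Suc (card ?J)" using fin by (simp add: card_insert_if)
  finally show "cnt D u c \<le> 2" using J1 by simp
  have IJK: "?I = ?J \<union> ?K" using cS by auto
  have "card ?I = card ?J + card ?K"
    unfolding IJK by (rule card_Un_disjoint) (use fin in auto)
  then have JK: "card ?J + card ?K \<le> 3" using card3 by simp
  show "cnt D c t \<le> 2"
  proof (cases "card ?J = 0")
    case False
    then have "card ?J = 1" using J1 by simp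
    then show ?thesis using JK by (simp add: cnt_def)
  next
    case True
    then have Je: "?J = {}" using fin by simp
    have "?K \<subseteq> {c}"
    proof
      fix p assume pK: "p \<in> ?K"
      show "p \<in> {c}"
      proof (rule ccontr)
        assume "p \<notin> {c}"
        then have cp: "c < p" using pK by auto
        let ?M = "{q\<in>D. c < q \<and> q < t}"
        have finM: "finite ?M" using fin by simp
        have pM: "p \<in> ?M" using pK cp by simp
        define p' where "p' = Min ?M"
        have p'M: "p' \<in> ?M" unfolding p'_def using finM pM Min_in by blast
        have p'min: "\<And>q. q \<in> ?M \<Longrightarrow> p' \<le> q" unfolding p'_def using finM by simp
        have "{q\<in>D. u < q \<and> q < p'} \<subseteq> {c}"
        proof
          fix q assume q: "q \<in> {q\<in>D. u < q \<and> q < p'}"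
          show "q \<in> {c}"
          proof (rule ccontr)
            assume qc: "q \<notin> {c}"
            show False
            proof (cases "q < c")
              case True
              then have "q \<in> ?J" using q by simp
              then show False using Je by simp
            next
              case False
              then have "c < q" using qc by simp
              then have "q \<in> ?M" using q p'M by auto
              then show False using p'min[of q] q by simp
            qed
          qed
        qed
        then have "card {q\<in>D. u < q \<and> q < p'} \<le> card {c}" by (intro card_mono) auto
        then have "p' \<in> ?S" using p'M cS by auto
        then have "p' \<le> c" using cmax by blast
        then show False using p'M by simp
      qed
    qed
    then have "card ?K \<le> card {c}" by (intro card_mono) auto
    then show ?thesis by (simp add: cnt_def)
  qed
qed

lemma cnt_insert_le: "finite D \<Longrightarrow> cnt (insert x D) a b \<le> cnt D a b + 1"
proof -
  assume f: "finite D"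
  have "{p\<in>insert x D. a \<le> p \<and> p < b} \<subseteq> insert x {p\<in>D. a \<le> p \<and> p < b}" by auto
  then have "card {p\<in>insert x D. a \<le> p \<and> p < b} \<le> card (insert x {p\<in>D. a \<le> p \<and> p < b})"
    using f by (intro card_mono) auto
  also have "\<dots> \<le> card {p\<in>D. a \<le> p \<and> p < b} + 1" using f by (simp add: card_insert_if)
  finally show ?thesis by (simp add: cnt_def)
qed

lemma blk_transfer:
  assumes B: "blk D tg w" and tw: "tg' w = tg w" and tp: "\<And>p. w < p \<Longrightarrow> p < tg w \<Longrightarrow> tg' p = tg p"
    and sets: "\<And>p. w \<le> p \<Longrightarrow> p < tg w \<Longrightarrow> (p \<in> D') = (p \<in> D)"
  shows "blk D' tg' w"
proof -
  have ce: "\<And>a b. w \<le> a \<Longrightarrow> b \<le> tg w \<Longrightarrow> cnt D' a b = cnt D a b"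
  proof -
    fix a b assume "w \<le> a" "b \<le> tg w"
    then have "{p\<in>D'. a \<le> p \<and> p < b} = {p\<in>D. a \<le> p \<and> p < b}" using sets by auto
    then show "cnt D' a b = cnt D a b" by (simp add: cnt_def)
  qed
  from B consider (U) "(\<forall>p\<in>D. w < p \<and> p < tg w \<longrightarrow> tg p = p)" "cnt D w (tg w) \<le> 3"
    | (P) c where "c \<in> D" "w < c" "c < tg w" "tg c = tg w" "\<forall>p\<in>D. w < p \<and> p < tg w \<and> p \<noteq> c \<longrightarrow> tg p = p"
       "cnt D w c \<le> 2" "cnt D c (tg w) \<le> 2"
    unfolding blk_def by blast
  then show ?thesis
  proof cases
    case U
    have "\<forall>p\<in>D'. w < p \<and> p < tg' w \<longrightarrow> tg' p = p" using U(1) tw tp sets by auto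
    moreover have "cnt D' w (tg' w) \<le> 3" using U(2) tw ce[of w "tg w"] by simp
    ultimately show ?thesis unfolding blk_def by blast
  next
    case (P c)
    have "c \<in> D' \<and> w < c \<and> c < tg' w \<and> tg' c = tg' w \<and> (\<forall>p\<in>D'. w < p \<and> p < tg' w \<and> p \<noteq> c \<longrightarrow> tg' p = p) \<and>
       cnt D' w c \<le> 2 \<and> cnt D' c (tg' w) \<le> 2"
      using P tw tp sets ce[of w c] ce[of c "tg w"] by auto
    then show ?thesis unfolding blk_def by blast
  qed
qed

lemma Inv_caseB:
  assumes I: "Inv (D, Ld, tg)" and x: "x \<notin> D" "0 < x" "\<not> Max D < x"
    and u: "u = Max {v\<in>Ld. v < x}"
    and c: "c \<in> D" "u < c" "c < tg u" "tg c \<noteq> c"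
  shows "Inv (insert x D, insert c Ld, tg(u := c))"
proof -
  let ?t = "tg u"
  let ?tg = "tg(u := c)"
  let ?D = "insert x D"
  have fin: "finite D" and D0: "0 \<in> D" using InvD[OF I] by auto
  have xL: "x \<notin> Ld" using x InvD(4)[OF I] by auto
  have xM: "x \<le> Max D" using x by simp
  note lf = leader_find[OF I x(2) xM xL, folded u]
  have uL: "u \<in> Ld" and ux: "u < x" and uM: "u \<noteq> Max D" and xt: "x < ?t" using lf by auto
  have uD: "u \<in> D" using uL InvD(4)[OF I] by auto
  have tL: "?t \<in> Ld" using InvD(10)[OF I uL uM] .
  have tD: "?t \<in> D" using tL InvD(4)[OF I] by auto
  have tM: "?t \<le> Max D" using Inv_Max_ge[OF I tD] .
  have Mx: "Max ?D = Max D" using fin D0 xM by (subst Max_insert) (auto simp: max_def)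
  have noL: "\<And>v. v \<in> Ld \<Longrightarrow> \<not> (u < v \<and> v < ?t)" using InvD(11)[OF I uL uM] by force
  have cL: "c \<notin> Ld" using noL c by blast
  have tgx: "tg x = x" using InvD(7)[OF I x(1)] .
  have B: "blk D tg u" using InvD(12)[OF I uL uM] .
  obtain c' where c': "c' \<in> D" "u < c'" "c' < ?t" "tg c' = ?t" "\<forall>p\<in>D. u < p \<and> p < ?t \<and> p \<noteq> c' \<longrightarrow> tg p = p"
       "cnt D u c' \<le> 2" "cnt D c' ?t \<le> 2"
    using B c unfolding blk_def by blast
  have cc: "c' = c" using c'(5) c by blast
  note cp = c'[unfolded cc]
  have cM: "c \<noteq> Max D" using c tM by auto
  have uc: "u \<noteq> c" using c by simp
  have L1: "\<forall>w\<in>insert c Ld. w \<noteq> Max ?D \<longrightarrow> w < ?tg w \<and> ?tg w \<in> insert c Ld \<and>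
       (\<forall>v\<in>insert c Ld. \<not> (w < v \<and> v < ?tg w))"
  proof (intro ballI impI)
    fix w assume w: "w \<in> insert c Ld" "w \<noteq> Max ?D"
    show "w < ?tg w \<and> ?tg w \<in> insert c Ld \<and> (\<forall>v\<in>insert c Ld. \<not> (w < v \<and> v < ?tg w))"
    proof (cases "w = u")
      case True
      then show ?thesis using c noL by (auto dest: noL)
    next
      case wu: False
      show ?thesis
      proof (cases "w = c")
        case True
        then show ?thesis using c noL tL uc cp(3,4) by (auto dest: noL)
      next
        case False
        then have wL: "w \<in> Ld" "w \<noteq> Max D" using w Mx by auto
        have "\<not> (w < c \<and> c < tg w)"
          using blocks_disj[OF I uL uM wL(1) wL(2)] wu c by metis
        then show ?thesis using InvD(9,10,11)[OF I wL] wu by (auto simp: not_less) (meson not_le)+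
      qed
    qed
  qed
  have L2: "\<forall>w\<in>insert c Ld. w \<noteq> Max ?D \<longrightarrow> blk ?D ?tg w"
  proof (intro ballI impI)
    fix w assume w: "w \<in> insert c Ld" "w \<noteq> Max ?D"
    show "blk ?D ?tg w"
    proof (cases "w = u")
      case True
      have "\<forall>p\<in>?D. u < p \<and> p < ?tg u \<longrightarrow> ?tg p = p" using cp x tgx by auto
      moreover have "cnt ?D u (?tg u) \<le> 3" using cnt_insert_le[OF fin, of x u c] cp(6) by simp
      ultimately show ?thesis unfolding blk_def True by blast
    next
      case wu: False
      show ?thesis
      proof (cases "w = c")
        case True
        have "\<forall>p\<in>?D. c < p \<and> p < ?tg c \<longrightarrow> ?tg p = p" using cp x uc c tgx by auto
        moreover have "cnt ?D c (?tg c) \<le> 3" using cnt_insert_le[OF fin, of x c ?t] cp(7) cp(4) uc by simp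
        ultimately show ?thesis unfolding blk_def True by blast
      next
        case False
        then have wL: "w \<in> Ld" "w \<noteq> Max D" using w Mx by auto
        have xw: "\<not> (w < x \<and> x < tg w)"
          using blocks_disj[OF I uL uM wL(1) wL(2)] wu ux xt by metis
        have uw: "\<not> (w < u \<and> u < tg w)" using InvD(11)[OF I wL uL] by force
        have xnw: "x \<noteq> w" using wL x InvD(4)[OF I] by auto
        show ?thesis
        proof (rule blk_transfer[OF InvD(12)[OF I wL]])
          show "?tg w = tg w" using wu by simp
          show "\<And>p. w < p \<Longrightarrow> p < tg w \<Longrightarrow> ?tg p = tg p" using uw by auto
          show "\<And>p. w \<le> p \<Longrightarrow> p < tg w \<Longrightarrow> (p \<in> ?D) = (p \<in> D)" using xw xnw by auto
        qed
      qed
    qed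
  qed
  have tgM: "?tg (Max ?D) = Max ?D" using Mx uM InvD(8)[OF I] by simp
  show ?thesis unfolding Inv_def
    using InvD[OF I] x Mx L1 L2 tgM c(1) uD by (auto simp: less_imp_le)
qed

lemma Inv_caseC:
  assumes I: "Inv (D, Ld, tg)" and x: "x \<notin> D" "0 < x" "\<not> Max D < x"
    and u: "u = Max {v\<in>Ld. v < x}"
    and nc: "\<not> (\<exists>c\<in>D. u < c \<and> c < tg u \<and> tg c \<noteq> c)"
    and c: "c = med (insert x D) u (tg u)"
  shows "Inv (insert x D, Ld, tg(c := tg u))"
proof -
  let ?t = "tg u"
  let ?tg = "tg(c := ?t)"
  let ?D = "insert x D"
  have fin: "finite D" and D0: "0 \<in> D" using InvD[OF I] by auto
  have xL: "x \<notin> Ld" using x InvD(4)[OF I] by auto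
  have xM: "x \<le> Max D" using x by simp
  note lf = leader_find[OF I x(2) xM xL, folded u]
  have uL: "u \<in> Ld" and ux: "u < x" and uM: "u \<noteq> Max D" and xt: "x < ?t" using lf by auto
  have uD: "u \<in> D" using uL InvD(4)[OF I] by auto
  have tL: "?t \<in> Ld" using InvD(10)[OF I uL uM] .
  have tD: "?t \<in> D" using tL InvD(4)[OF I] by auto
  have tM: "?t \<le> Max D" using Inv_Max_ge[OF I tD] .
  have Mx: "Max ?D = Max D" using fin D0 xM by (subst Max_insert) (auto simp: max_def)
  have noL: "\<And>v. v \<in> Ld \<Longrightarrow> \<not> (u < v \<and> v < ?t)" using InvD(11)[OF I uL uM] by force
  have tgx: "tg x = x" using InvD(7)[OF I x(1)] .
  have B: "blk D tg u" using InvD(12)[OF I uL uM] .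
  have U1: "\<forall>p\<in>D. u < p \<and> p < ?t \<longrightarrow> tg p = p" using nc by auto
  have U2: "cnt D u ?t \<le> 3"
  proof -
    have "\<not> (\<exists>c\<in>D. u < c \<and> c < tg u \<and> tg c = tg u)" using nc by auto
    then show ?thesis using B unfolding blk_def by blast
  qed
  have "{p\<in>?D. u \<le> p \<and> p < ?t} = insert u {p\<in>?D. u < p \<and> p < ?t}" using uD ux xt by auto
  then have "cnt ?D u ?t = Suc (card {p\<in>?D. u < p \<and> p < ?t})" using fin by (simp add: cnt_def)
  moreover have "cnt ?D u ?t \<le> 4" using cnt_insert_le[OF fin, of x u ?t] U2 by simp
  ultimately have card3: "card {p\<in>?D. u < p \<and> p < ?t} \<le> 3" by simp
  note mp = med_props[OF _ _ _ ux xt card3, folded c]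
  have cD: "c \<in> ?D" and uc: "u < c" and ct: "c < ?t" and cnt1: "cnt ?D u c \<le> 2" and cnt2: "cnt ?D c ?t \<le> 2"
    using mp fin uD by auto
  have cL: "c \<notin> Ld" using noL uc ct by blast
  have cM: "c \<noteq> Max D" using ct tM by auto
  have ucne: "u \<noteq> c" using uc by simp
  have tgL: "\<And>w. w \<in> Ld \<Longrightarrow> ?tg w = tg w" using cL by auto
  have L1: "\<forall>w\<in>Ld. w \<noteq> Max ?D \<longrightarrow> w < ?tg w \<and> ?tg w \<in> Ld \<and> (\<forall>v\<in>Ld. \<not> (w < v \<and> v < ?tg w))"
    using InvD(9,10,11)[OF I] tgL Mx by (auto simp: not_less) (meson not_le)+
  have L2: "\<forall>w\<in>Ld. w \<noteq> Max ?D \<longrightarrow> blk ?D ?tg w"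
  proof (intro ballI impI)
    fix w assume w: "w \<in> Ld" "w \<noteq> Max ?D"
    show "blk ?D ?tg w"
    proof (cases "w = u")
      case True
      have "c \<in> ?D \<and> u < c \<and> c < ?tg u \<and> ?tg c = ?tg u \<and> (\<forall>p\<in>?D. u < p \<and> p < ?tg u \<and> p \<noteq> c \<longrightarrow> ?tg p = p) \<and>
         cnt ?D u c \<le> 2 \<and> cnt ?D c (?tg u) \<le> 2"
        using cD uc ct ucne cnt1 cnt2 U1 tgx by auto
      then show ?thesis unfolding blk_def True by blast
    next
      case wu: False
      then have wL: "w \<in> Ld" "w \<noteq> Max D" using w Mx by auto
      have xw: "\<not> (w < x \<and> x < tg w)"
        using blocks_disj[OF I uL uM wL(1) wL(2)] wu ux xt by metis
      have cw: "\<not> (w < c \<and> c < tg w)"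
        using blocks_disj[OF I uL uM wL(1) wL(2)] wu uc ct by metis
      have xnw: "x \<noteq> w" using wL x InvD(4)[OF I] by auto
      show ?thesis
      proof (rule blk_transfer[OF InvD(12)[OF I wL]])
        show "?tg w = tg w" using tgL wL by simp
        show "\<And>p. w < p \<Longrightarrow> p < tg w \<Longrightarrow> ?tg p = tg p" using cw by auto
        show "\<And>p. w \<le> p \<Longrightarrow> p < tg w \<Longrightarrow> (p \<in> ?D) = (p \<in> D)" using xw xnw by auto
      qed
    qed
  qed
  have tgM: "?tg (Max ?D) = Max ?D" using Mx cM InvD(8)[OF I] by simp
  have out: "\<forall>p. p \<notin> ?D \<longrightarrow> ?tg p = p" using cD InvD(7)[OF I] by auto
  show ?thesis unfolding Inv_def
    using InvD[OF I] x Mx L1 L2 tgM out by (auto simp: less_imp_le)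
qed

lemma Inv_step:
  assumes I: "Inv st" and x: "x \<notin> fst st" "0 < x"
  shows "Inv (step x st)"
proof -
  obtain D Ld tg where st: "st = (D, Ld, tg)" by (cases st) auto
  have I': "Inv (D, Ld, tg)" and xD: "x \<notin> D" using I x st by auto
  show ?thesis
  proof (cases "Max D < x")
    case True
    then show ?thesis unfolding st step_def using Inv_caseA[OF I' xD True] by simp
  next
    case False
    define u where "u = Max {v\<in>Ld. v < x}"
    show ?thesis
    proof (cases "\<exists>c\<in>D. u < c \<and> c < tg u \<and> tg c \<noteq> c")
      case True
      define c where "c = (SOME c. c\<in>D \<and> u < c \<and> c < tg u \<and> tg c \<noteq> c)"
      have ex: "\<exists>c. c\<in>D \<and> u < c \<and> c < tg u \<and> tg c \<noteq> c" using True by blast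
      have c: "c\<in>D \<and> u < c \<and> c < tg u \<and> tg c \<noteq> c" unfolding c_def
        by (rule someI_ex[OF ex])
      have "step x st = (insert x D, insert c Ld, tg(u := c))"
        unfolding st step_def using False True by (simp add: Let_def u_def[symmetric] c_def[symmetric])
      then show ?thesis using Inv_caseB[OF I' xD x(2) False u_def] c by simp
    next
      case nc: False
      have "step x st = (insert x D, Ld, tg(med (insert x D) u (tg u) := tg u))"
        unfolding st step_def using False nc by (auto simp: Let_def u_def[symmetric])
      then show ?thesis using Inv_caseC[OF I' xD x(2) False u_def nc refl] by simp
    qed
  qed
qed

lemma Inv_run:
  assumes "distinct ys" "\<forall>y\<in>set ys. 0 < y"
  shows "Inv (run ys)"
  using assms
proof (induction ys rule: rev_induct)
  case Nil then show ?case by (simp add: run_def Inv_init)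
next
  case (snoc y ys)
  have "y \<notin> fst (run ys)" using snoc.prems fst_run[of ys] by auto
  then show ?case using snoc Inv_step run_snoc by simp
qed


lemma sum_sq_le_card:
  fixes x :: "'a \<Rightarrow> real"
  assumes "finite S"
  shows "(\<Sum>i\<in>S. x i)^2 \<le> real (card S) * (\<Sum>i\<in>S. (x i)^2)"
proof -
  have "0 \<le> (\<Sum>i\<in>S. \<Sum>j\<in>S. (x i - x j)^2)" by (intro sum_nonneg) auto
  also have "(\<Sum>i\<in>S. \<Sum>j\<in>S. (x i - x j)^2) = (\<Sum>i\<in>S. \<Sum>j\<in>S. (x i)^2 + (x j)^2 - 2 * x i * x j)"
    by (simp add: power2_diff)
  also have "\<dots> = (\<Sum>i\<in>S. \<Sum>j\<in>S. (x i)^2) + (\<Sum>i\<in>S. \<Sum>j\<in>S. (x j)^2) - 2 * (\<Sum>i\<in>S. \<Sum>j\<in>S. x i * x j)"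
    by (simp add: sum.distrib sum_subtractf sum_distrib_left mult.assoc)
  also have "(\<Sum>i\<in>S. \<Sum>j\<in>S. x i * x j) = (\<Sum>i\<in>S. x i)^2"
    by (simp add: power2_eq_square sum_product)
  also have "(\<Sum>i\<in>S. \<Sum>j\<in>S. (x i)^2) = real (card S) * (\<Sum>i\<in>S. (x i)^2)"
    by (simp add: sum_distrib_left)
  also have "(\<Sum>i\<in>S. \<Sum>j\<in>S. (x j)^2) = real (card S) * (\<Sum>i\<in>S. (x i)^2)"
    by simp
  finally show ?thesis by simp
qed

lemma sum_powr_le_card:
  fixes x :: "'a \<Rightarrow> real"
  assumes "finite S" "\<And>i. i \<in> S \<Longrightarrow> 0 \<le> x i" "0 \<le> a"
  shows "(\<Sum>i\<in>S. x i) powr a \<le> real (card S) powr a * (\<Sum>i\<in>S. x i powr a)"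
proof (cases "S = {}")
  case True then show ?thesis by simp
next
  case False
  define M where "M = Max (x ` S)"
  have MS: "M \<in> x ` S" unfolding M_def using assms(1) False by simp
  have xM: "\<And>i. i \<in> S \<Longrightarrow> x i \<le> M" unfolding M_def using assms(1) by simp
  have M0: "0 \<le> M" using MS assms(2) by auto
  have "(\<Sum>i\<in>S. x i) \<le> (\<Sum>i\<in>S. M)" using xM by (intro sum_mono) auto
  also have "\<dots> = real (card S) * M" by simp
  finally have s: "(\<Sum>i\<in>S. x i) \<le> real (card S) * M" .
  have "(\<Sum>i\<in>S. x i) powr a \<le> (real (card S) * M) powr a"
    using s assms by (intro powr_mono2) (auto intro: sum_nonneg)
  also have "\<dots> = real (card S) powr a * M powr a" using M0 by (simp add: powr_mult)
  also have "M powr a \<le> (\<Sum>i\<in>S. x i powr a)"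
  proof -
    obtain j where j: "j \<in> S" "M = x j" using MS by auto
    show ?thesis unfolding j(2) using assms(1) j(1)
      by (intro member_le_sum) auto
  qed
  then have "real (card S) powr a * M powr a \<le> real (card S) powr a * (\<Sum>i\<in>S. x i powr a)"
    by (intro mult_left_mono) auto
  finally show ?thesis .
qed

lemma telescope:
  assumes fin: "finite D" and a: "a \<in> D" and b: "b \<in> D" and ab: "a \<le> b"
  shows "(\<Sum>p\<in>{p\<in>D. a \<le> p \<and> p < b}. nx D p - p) = b - a"
  using b ab
proof (induction "card {p\<in>D. a \<le> p \<and> p < b}" arbitrary: b rule: less_induct)
  case less
  let ?S = "{p\<in>D. a \<le> p \<and> p < b}"
  have finS: "finite ?S" using fin by simp
  show ?case
  proof (cases "?S = {}")
    case True
    then have "\<not> a < b" using a by auto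
    then have "a = b" using less.prems by simp
    then show ?thesis unfolding True by simp
  next
    case False
    define m where "m = Max ?S"
    have mS: "m \<in> ?S" unfolding m_def using finS False by (rule Max_in)
    have mmax: "\<And>p. p \<in> ?S \<Longrightarrow> p \<le> m" unfolding m_def using finS by simp
    have nxm: "nx D m = b"
    proof -
      have fin2: "finite {q\<in>D. m < q}" using fin by simp
      have bin: "b \<in> {q\<in>D. m < q}" using mS less.prems by simp
      have "\<forall>q\<in>{q\<in>D. m < q}. b \<le> q"
      proof
        fix q assume q: "q \<in> {q\<in>D. m < q}"
        show "b \<le> q"
        proof (rule ccontr)
          assume "\<not> b \<le> q"
          then have "q \<in> ?S" using q mS by auto
          then show False using mmax q by force
        qed
      qed
      then show ?thesis unfolding nx_def using fin2 bin
        by (intro antisym Min_le) (auto intro: Min.boundedI)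
    qed
    have split: "?S = insert m {p\<in>D. a \<le> p \<and> p < m}" using mS mmax by force
    have mnot: "m \<notin> {p\<in>D. a \<le> p \<and> p < m}" by simp
    have sub: "{p\<in>D. a \<le> p \<and> p < m} \<subset> ?S" using split mnot by auto
    have lt: "card {p\<in>D. a \<le> p \<and> p < m} < card ?S" using psubset_card_mono[OF finS sub] .
    have IH: "(\<Sum>p\<in>{p\<in>D. a \<le> p \<and> p < m}. nx D p - p) = m - a"
      using less.hyps[OF lt] mS by simp
    have "(\<Sum>p\<in>?S. nx D p - p) = (nx D m - m) + (\<Sum>p\<in>{p\<in>D. a \<le> p \<and> p < m}. nx D p - p)"
      by (subst split) (simp add: fin)
    also have "\<dots> = b - a" using IH nxm by simp
    finally show ?thesis .
  qed
qed

lemma golden_ineq: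
  fixes A B :: real
  shows "(A + B)^2 + B^2 \<le> (3 + sqrt 5) / 2 * (A^2 + B^2)"
proof -
  define r where "r = sqrt 5"
  have r2: "r * r = 5" unfolding r_def by simp
  have r0: "0 < 1 + r" unfolding r_def by (simp add: add_pos_nonneg)
  have eq: "2 * (1 + r) * ((3 + r) / 2 * (A^2 + B^2) - ((A + B)^2 + B^2)) = ((1 + r) * A - 2 * B)^2"
  proof -
    have "2 * (1 + r) * ((3 + r) / 2 * (A^2 + B^2) - ((A + B)^2 + B^2))
        = (1 + r) * (3 + r) * (A^2 + B^2) - 2 * (1 + r) * ((A + B)^2 + B^2)" by (simp add: field_simps)
    also have "\<dots> = (3 + 4 * r + r * r) * (A^2 + B^2) - 2 * (1 + r) * ((A + B)^2 + B^2)" by (simp add: algebra_simps)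
    also have "\<dots> = (8 + 4 * r) * (A^2 + B^2) - 2 * (1 + r) * ((A + B)^2 + B^2)" using r2 by simp
    also have "\<dots> = ((1 + r) * A - 2 * B)^2 + (5 - r * r) * A^2"
      by (simp add: algebra_simps power2_eq_square)
    also have "\<dots> = ((1 + r) * A - 2 * B)^2" using r2 by simp
    finally show ?thesis .
  qed
  have "0 \<le> 2 * (1 + r) * ((3 + r) / 2 * (A^2 + B^2) - ((A + B)^2 + B^2))" unfolding eq by simp
  then have "0 \<le> (3 + r) / 2 * (A^2 + B^2) - ((A + B)^2 + B^2)"
    using r0 by (simp add: zero_le_mult_iff)
  then show ?thesis unfolding r_def by simp
qed

lemma nx_props:
  assumes "finite D" "p \<in> D" "p \<noteq> Max D"
  shows "nx D p \<in> D" "p < nx D p"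
proof -
  have "p \<le> Max D" using assms by simp
  moreover have "Max D \<in> D" using assms Max_in[of D] by blast
  moreover have "p < Max D" using assms by (metis Max_ge order_le_less)
  ultimately have ne: "Max D \<in> {q\<in>D. p < q}" by simp
  have "nx D p \<in> {q\<in>D. p < q}" unfolding nx_def using assms(1) ne by (intro Min_in) auto
  then show "nx D p \<in> D" "p < nx D p" by auto
qed

lemma cover:
  assumes I: "Inv (D, Ld, tg)" and q: "q \<in> D" "0 < q"
  shows "\<exists>v\<in>D. v < q \<and> q \<le> tg v"
proof -
  define u where "u = Max {v\<in>Ld. v < q}"
  have fin: "finite {v\<in>Ld. v < q}" using Ld_finite[OF I] by simp
  have ne: "0 \<in> {v\<in>Ld. v < q}" using InvD(5)[OF I] q by simp
  have uin: "u \<in> {v\<in>Ld. v < q}" unfolding u_def using fin ne Max_in by blast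
  have ub: "\<And>v. v \<in> Ld \<Longrightarrow> v < q \<Longrightarrow> v \<le> u" unfolding u_def using fin by simp
  have uL: "u \<in> Ld" and uq: "u < q" using uin by auto
  have qM: "q \<le> Max D" using Inv_Max_ge[OF I q(1)] .
  have uM: "u \<noteq> Max D" using uq qM by auto
  have "tg u \<in> Ld" "u < tg u" using InvD(9,10)[OF I uL uM] by auto
  then have "q \<le> tg u" using ub[of "tg u"] by force
  moreover have "u \<in> D" using uL InvD(4)[OF I] by auto
  ultimately show ?thesis using uq by blast
qed

lemma tg_ge:
  assumes I: "Inv (D, Ld, tg)"
  shows "p \<le> tg p"
proof (cases "p \<in> D")
  case False then show ?thesis using InvD(7)[OF I] by simp
next
  case pD: True
  show ?thesis
  proof (cases "p \<in> Ld")
    case True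
    then show ?thesis using InvD(8,9)[OF I] by (cases "p = Max D") (auto intro: less_imp_le)
  next
    case False
    have p0: "0 < p" using InvD(3,5)[OF I] pD False by (metis order_le_less)
    note lf = leader_find[OF I p0 Inv_Max_ge[OF I pD] False]
    define u where "u = Max {v\<in>Ld. v < p}"
    have uL: "u \<in> Ld" "u < p" "u \<noteq> Max D" "p < tg u" using lf unfolding u_def by auto
    have "blk D tg u" using InvD(12)[OF I uL(1,3)] .
    then have "tg p = p \<or> tg p = tg u" unfolding blk_def using pD uL by metis
    then show ?thesis using uL by auto
  qed
qed

definition Kb :: "real \<Rightarrow> real" where
  "Kb a = (if a = 2 then 3 + sqrt 5 else 2 * 4 powr a)"

lemma Kb_pos: "0 < Kb a"
  unfolding Kb_def by (simp add: add_pos_nonneg)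

lemma sum_single_nz:
  assumes "finite B" "u \<in> B" "\<And>p. p \<in> B \<Longrightarrow> p \<noteq> u \<Longrightarrow> f p = (0::real)"
  shows "sum f B = f u"
proof -
  have "sum f B = f u + sum f (B - {u})" using assms(1,2) by (simp add: sum.remove)
  also have "sum f (B - {u}) = 0" using assms(3) by (intro sum.neutral) auto
  finally show ?thesis by simp
qed

lemma block_bound:
  assumes I: "Inv (D, Ld, tg)" and uL: "u \<in> Ld" and uM: "u \<noteq> Max D" and a: "0 \<le> a"
  shows "(\<Sum>p\<in>{p\<in>D. u \<le> p \<and> p < tg u}. (tg p - p) powr a)
           \<le> Kb a * (\<Sum>p\<in>{p\<in>D. u \<le> p \<and> p < tg u}. (nx D p - p) powr a)"
proof -
  let ?t = "tg u"
  let ?B = "{p\<in>D. u \<le> p \<and> p < ?t}"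
  let ?f = "\<lambda>p. (tg p - p) powr a"
  let ?g = "\<lambda>p. nx D p - p"
  have fin: "finite D" using InvD(1)[OF I] .
  have finB: "finite ?B" using fin by simp
  have uD: "u \<in> D" using uL InvD(4)[OF I] by auto
  have ut: "u < ?t" using InvD(9)[OF I uL uM] .
  have tD: "?t \<in> D" using InvD(4)[OF I] InvD(10)[OF I uL uM] by auto
  have tM: "?t \<le> Max D" using Inv_Max_ge[OF I tD] .
  have g0: "\<And>p. p \<in> ?B \<Longrightarrow> 0 \<le> ?g p"
  proof -
    fix p assume p: "p \<in> ?B"
    then have pM: "p \<noteq> Max D" using tM by auto
    have "p \<in> D" using p by simp
    then show "0 \<le> ?g p" using nx_props[OF fin _ pM] by (simp add: less_imp_le)
  qed
  have uB: "u \<in> ?B" using uD ut by simp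
  have tel: "(\<Sum>p\<in>?B. ?g p) = ?t - u" using telescope[OF fin uD tD] ut by simp
  have Sg0: "0 \<le> (\<Sum>p\<in>?B. ?g p powr a)" by (intro sum_nonneg) auto
  have B: "blk D tg u" using InvD(12)[OF I uL uM] .
  consider (U) "(\<forall>p\<in>D. u < p \<and> p < ?t \<longrightarrow> tg p = p)" "cnt D u ?t \<le> 3"
    | (P) c where "c \<in> D" "u < c" "c < ?t" "tg c = ?t" "\<forall>p\<in>D. u < p \<and> p < ?t \<and> p \<noteq> c \<longrightarrow> tg p = p"
       "cnt D u c \<le> 2" "cnt D c ?t \<le> 2"
    using B unfolding blk_def by blast
  then show ?thesis
  proof cases
    case U
    have sf: "(\<Sum>p\<in>?B. ?f p) = (?t - u) powr a"
      by (subst sum_single_nz[OF finB uB]) (use U(1) in auto)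
    have cB: "card ?B \<le> 3" using U(2) by (simp add: cnt_def)
    show ?thesis
    proof (cases "a = 2")
      case True
      have "(\<Sum>p\<in>?B. ?f p) = (\<Sum>p\<in>?B. ?g p)^2" using sf tel ut True by simp
      also have "\<dots> \<le> real (card ?B) * (\<Sum>p\<in>?B. (?g p)^2)" by (rule sum_sq_le_card[OF finB])
      also have "\<dots> \<le> 3 * (\<Sum>p\<in>?B. (?g p)^2)"
        using cB by (intro mult_right_mono) (auto intro: sum_nonneg)
      also have "\<dots> \<le> (3 + sqrt 5) * (\<Sum>p\<in>?B. (?g p)^2)"
        by (intro mult_right_mono) (auto intro: sum_nonneg)
      also have "(\<Sum>p\<in>?B. (?g p)^2) = (\<Sum>p\<in>?B. ?g p powr a)"
        using True g0 by (intro sum.cong) auto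
      finally show ?thesis using True by (simp add: Kb_def)
    next
      case False
      have "(\<Sum>p\<in>?B. ?f p) = (\<Sum>p\<in>?B. ?g p) powr a" using sf tel by simp
      also have "\<dots> \<le> real (card ?B) powr a * (\<Sum>p\<in>?B. ?g p powr a)"
        by (rule sum_powr_le_card[OF finB g0 a])
      also have "\<dots> \<le> 4 powr a * (\<Sum>p\<in>?B. ?g p powr a)"
        using cB a by (intro mult_right_mono Sg0 powr_mono2) auto
      also have "\<dots> \<le> 2 * 4 powr a * (\<Sum>p\<in>?B. ?g p powr a)"
        using Sg0 by (simp add: mult_right_mono)
      finally show ?thesis using False by (simp add: Kb_def)
    qed
  next
    case (P c)
    let ?B1 = "{p\<in>D. u \<le> p \<and> p < c}"
    let ?B2 = "{p\<in>D. c \<le> p \<and> p < ?t}"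
    have finB1: "finite ?B1" and finB2: "finite ?B2" using fin by auto
    have BU: "?B = ?B1 \<union> ?B2" using P(2,3) by auto
    have disj: "?B1 \<inter> ?B2 = {}" by auto
    have split: "\<And>h. (\<Sum>p\<in>?B. h p) = (\<Sum>p\<in>?B1. h p) + (\<Sum>p\<in>?B2. h p)"
      unfolding BU by (rule sum.union_disjoint[OF finB1 finB2 disj])
    have s1: "(\<Sum>p\<in>?B1. ?f p) = ?f u"
    proof (rule sum_single_nz[OF finB1])
      show "u \<in> ?B1" using uD P(2) by simp
      fix p assume p: "p \<in> ?B1" "p \<noteq> u"
      then have "tg p = p" using P(3,5) by auto
      then show "?f p = 0" by simp
    qed
    have s2: "(\<Sum>p\<in>?B2. ?f p) = ?f c"
    proof (rule sum_single_nz[OF finB2])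
      show "c \<in> ?B2" using P(1,3) by simp
      fix p assume p: "p \<in> ?B2" "p \<noteq> c"
      then have "tg p = p" using P(2,5) by auto
      then show "?f p = 0" by simp
    qed
    have tel1: "(\<Sum>p\<in>?B1. ?g p) = c - u" using telescope[OF fin uD P(1)] P(2) by simp
    have tel2: "(\<Sum>p\<in>?B2. ?g p) = ?t - c" using telescope[OF fin P(1) tD] P(3) by simp
    have c1: "card ?B1 \<le> 2" using P(6) by (simp add: cnt_def)
    have c2: "card ?B2 \<le> 2" using P(7) by (simp add: cnt_def)
    have g01: "\<And>p. p \<in> ?B1 \<Longrightarrow> 0 \<le> ?g p" using g0 BU by blast
    have g02: "\<And>p. p \<in> ?B2 \<Longrightarrow> 0 \<le> ?g p" using g0 BU by blast
    have sf: "(\<Sum>p\<in>?B. ?f p) = (?t - u) powr a + (?t - c) powr a" using split[of ?f] s1 s2 P(4) by simp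
    show ?thesis
    proof (cases "a = 2")
      case True
      define A where "A = c - u"
      define C where "C = ?t - c"
      have "(\<Sum>p\<in>?B. ?f p) = (A + C)^2 + C^2" using sf True P(2,3) ut unfolding A_def C_def by simp
      also have "\<dots> \<le> (3 + sqrt 5) / 2 * (A^2 + C^2)" by (rule golden_ineq)
      also have "A^2 \<le> 2 * (\<Sum>p\<in>?B1. (?g p)^2)"
      proof -
        have "A^2 \<le> real (card ?B1) * (\<Sum>p\<in>?B1. (?g p)^2)" unfolding A_def tel1[symmetric]
          by (rule sum_sq_le_card[OF finB1])
        also have "\<dots> \<le> 2 * (\<Sum>p\<in>?B1. (?g p)^2)" using c1 by (intro mult_right_mono) (auto intro: sum_nonneg)
        finally show ?thesis .
      qed
      also have "C^2 \<le> 2 * (\<Sum>p\<in>?B2. (?g p)^2)"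
      proof -
        have "C^2 \<le> real (card ?B2) * (\<Sum>p\<in>?B2. (?g p)^2)" unfolding C_def tel2[symmetric]
          by (rule sum_sq_le_card[OF finB2])
        also have "\<dots> \<le> 2 * (\<Sum>p\<in>?B2. (?g p)^2)" using c2 by (intro mult_right_mono) (auto intro: sum_nonneg)
        finally show ?thesis .
      qed
      also have "(\<Sum>p\<in>?B1. (?g p)^2) = (\<Sum>p\<in>?B1. ?g p powr a)"
        using True g01 by (intro sum.cong) auto
      also have "(\<Sum>p\<in>?B2. (?g p)^2) = (\<Sum>p\<in>?B2. ?g p powr a)"
        using True g02 by (intro sum.cong) auto
      finally have "(\<Sum>p\<in>?B. ?f p) \<le> (3 + sqrt 5) / 2 * (2 * (\<Sum>p\<in>?B1. ?g p powr a) + 2 * (\<Sum>p\<in>?B2. ?g p powr a))"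
        by (simp add: add_pos_nonneg)
      also have "\<dots> = (3 + sqrt 5) * (\<Sum>p\<in>?B. ?g p powr a)" using split[of "\<lambda>p. ?g p powr a"] by simp
      finally show ?thesis using True by (simp add: Kb_def)
    next
      case False
      have "(?t - c) powr a \<le> (?t - u) powr a" using P(2,3) a by (intro powr_mono2) auto
      then have "(\<Sum>p\<in>?B. ?f p) \<le> 2 * (?t - u) powr a" using sf by simp
      also have "(?t - u) powr a = (\<Sum>p\<in>?B. ?g p) powr a" using tel by simp
      also have "\<dots> \<le> real (card ?B) powr a * (\<Sum>p\<in>?B. ?g p powr a)"
        by (rule sum_powr_le_card[OF finB g0 a])
      also have "\<dots> \<le> 4 powr a * (\<Sum>p\<in>?B. ?g p powr a)"
      proof -
        have "card ?B = card ?B1 + card ?B2" unfolding BU by (rule card_Un_disjoint[OF finB1 finB2 disj])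
        then have "card ?B \<le> 4" using c1 c2 by simp
        then show ?thesis using a by (intro mult_right_mono Sg0 powr_mono2) auto
      qed
      finally show ?thesis using False by (simp add: Kb_def mult.assoc)
    qed
  qed
qed

lemma blocks_partition:
  assumes I: "Inv (D, Ld, tg)"
  shows "D - {Max D} = (\<Union>u\<in>Ld - {Max D}. {p\<in>D. u \<le> p \<and> p < tg u})"
proof
  show "D - {Max D} \<subseteq> (\<Union>u\<in>Ld - {Max D}. {p\<in>D. u \<le> p \<and> p < tg u})"
  proof
    fix p assume p: "p \<in> D - {Max D}"
    show "p \<in> (\<Union>u\<in>Ld - {Max D}. {p\<in>D. u \<le> p \<and> p < tg u})"
    proof (cases "p \<in> Ld")
      case True
      then have "p < tg p" using InvD(9)[OF I] p by auto
      then show ?thesis using True p by auto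
    next
      case False
      have p0: "0 < p" using InvD(3,5)[OF I] p False by (metis DiffD1 order_le_less)
      have pD: "p \<in> D" using p by simp
      note lf = leader_find[OF I p0 Inv_Max_ge[OF I pD] False]
      then show ?thesis using pD by (auto intro!: bexI[where x = "Max {v\<in>Ld. v < p}"])
    qed
  qed
next
  show "(\<Union>u\<in>Ld - {Max D}. {p\<in>D. u \<le> p \<and> p < tg u}) \<subseteq> D - {Max D}"
  proof
    fix p assume "p \<in> (\<Union>u\<in>Ld - {Max D}. {p\<in>D. u \<le> p \<and> p < tg u})"
    then obtain u where u: "u \<in> Ld" "u \<noteq> Max D" "p \<in> D" "p < tg u" by auto
    have "tg u \<in> D" using InvD(4)[OF I] InvD(10)[OF I u(1,2)] by auto
    then have "tg u \<le> Max D" using Inv_Max_ge[OF I] by blast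
    then show "p \<in> D - {Max D}" using u by auto
  qed
qed

lemma blocks_disjoint:
  assumes I: "Inv (D, Ld, tg)"
  shows "\<forall>u\<in>Ld - {Max D}. \<forall>w\<in>Ld - {Max D}. u \<noteq> w \<longrightarrow>
           {p\<in>D. u \<le> p \<and> p < tg u} \<inter> {p\<in>D. w \<le> p \<and> p < tg w} = {}"
proof (intro ballI impI)
  fix u w assume u: "u \<in> Ld - {Max D}" and w: "w \<in> Ld - {Max D}" and uw: "u \<noteq> w"
  show "{p\<in>D. u \<le> p \<and> p < tg u} \<inter> {p\<in>D. w \<le> p \<and> p < tg w} = {}"
  proof (cases "u < w")
    case True
    then have "tg u \<le> w" using InvD(11)[OF I] u w by auto
    then show ?thesis by auto
  next
    case False
    then have "w < u" using uw by simp
    then have "tg w \<le> u" using InvD(11)[OF I] u w by auto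
    then show ?thesis by auto
  qed
qed

lemma cost_bound:
  assumes I: "Inv (D, Ld, tg)" and a: "0 \<le> a"
  shows "(\<Sum>p\<in>D. (tg p - p) powr a) \<le> Kb a * (\<Sum>p\<in>D - {Max D}. (nx D p - p) powr a)"
proof -
  let ?f = "\<lambda>p. (tg p - p) powr a"
  let ?g = "\<lambda>p. (nx D p - p) powr a"
  let ?L = "Ld - {Max D}"
  let ?Bk = "\<lambda>u. {p\<in>D. u \<le> p \<and> p < tg u}"
  have fin: "finite D" using InvD(1)[OF I] .
  have finL: "finite ?L" using Ld_finite[OF I] by simp
  have finB: "\<forall>u\<in>?L. finite (?Bk u)" using fin by simp
  have MD: "Max D \<in> D" using fin InvD(2)[OF I] Max_in by blast
  have "(\<Sum>p\<in>D. ?f p) = ?f (Max D) + (\<Sum>p\<in>D - {Max D}. ?f p)"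
    using fin MD by (simp add: sum.remove)
  also have "?f (Max D) = 0" using InvD(8)[OF I] by simp
  also have "(\<Sum>p\<in>D - {Max D}. ?f p) = (\<Sum>u\<in>?L. \<Sum>p\<in>?Bk u. ?f p)"
    unfolding blocks_partition[OF I] by (rule sum.UNION_disjoint[OF finL finB blocks_disjoint[OF I]])
  also have "\<dots> \<le> (\<Sum>u\<in>?L. Kb a * (\<Sum>p\<in>?Bk u. ?g p))"
    using block_bound[OF I _ _ a] by (intro sum_mono) auto
  also have "\<dots> = Kb a * (\<Sum>u\<in>?L. \<Sum>p\<in>?Bk u. ?g p)" by (simp add: sum_distrib_left)
  also have "(\<Sum>u\<in>?L. \<Sum>p\<in>?Bk u. ?g p) = (\<Sum>p\<in>D - {Max D}. ?g p)"
    unfolding blocks_partition[OF I] by (rule sum.UNION_disjoint[OF finL finB blocks_disjoint[OF I], symmetric])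
  finally show ?thesis by simp
qed


lemma powr_superadd:
  fixes x y a :: real
  assumes x: "0 \<le> x" and y: "0 \<le> y" and a: "1 \<le> a"
  shows "x powr a + y powr a \<le> (x + y) powr a"
proof (cases "x + y = 0")
  case True
  then have "x = 0" "y = 0" using x y by auto
  then show ?thesis by simp
next
  case False
  let ?s = "x + y"
  have s0: "0 < ?s" using x y False by simp
  have key: "\<And>z. 0 \<le> z \<Longrightarrow> z \<le> ?s \<Longrightarrow> z powr a \<le> ?s powr a * (z / ?s)"
  proof -
    fix z assume z: "0 \<le> z" "z \<le> ?s"
    have t: "0 \<le> z / ?s" "z / ?s \<le> 1" using z s0 by auto
    have "z powr a = (?s * (z / ?s)) powr a" using s0 by simp
    also have "\<dots> = ?s powr a * (z / ?s) powr a" by (rule powr_mult)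
    also have "(z / ?s) powr a \<le> (z / ?s) powr 1" using powr_mono'[OF a t] .
    also have "(z / ?s) powr 1 = z / ?s" using t by (simp only: powr_one)
    finally show "z powr a \<le> ?s powr a * (z / ?s)" by (simp add: mult_left_mono)
  qed
  have "x powr a + y powr a \<le> ?s powr a * (x / ?s) + ?s powr a * (y / ?s)"
    using key[of x] key[of y] x y by (intro add_mono) auto
  also have "\<dots> = ?s powr a * (x / ?s + y / ?s)" by (simp only: distrib_left)
  also have "x / ?s + y / ?s = 1" using s0 by (simp add: add_divide_distrib[symmetric])
  finally show ?thesis by simp
qed

lemma sum_powr_superadd:
  fixes x :: "'b \<Rightarrow> real"
  assumes "finite S" "\<And>i. i \<in> S \<Longrightarrow> 0 \<le> x i" "1 \<le> a"
  shows "(\<Sum>i\<in>S. x i powr a) \<le> (\<Sum>i\<in>S. x i) powr a"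
  using assms
proof (induction S rule: finite_induct)
  case empty then show ?case by simp
next
  case (insert i S)
  have "(\<Sum>j\<in>insert i S. x j powr a) = x i powr a + (\<Sum>j\<in>S. x j powr a)" using insert by simp
  also have "\<dots> \<le> x i powr a + (\<Sum>j\<in>S. x j) powr a" using insert by simp
  also have "\<dots> \<le> (x i + (\<Sum>j\<in>S. x j)) powr a"
    using insert by (intro powr_superadd) (auto intro: sum_nonneg)
  finally show ?case using insert by simp
qed

lemma intervals_sum:
  fixes l r :: "'b \<Rightarrow> real"
  assumes "finite I" "lo \<le> hi"
    and "\<And>i. i \<in> I \<Longrightarrow> lo \<le> l i \<and> l i < r i \<and> r i \<le> hi"
    and "\<And>i j. i \<in> I \<Longrightarrow> j \<in> I \<Longrightarrow> i \<noteq> j \<Longrightarrow> r i \<le> l j \<or> r j \<le> l i"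
  shows "(\<Sum>i\<in>I. r i - l i) \<le> hi - lo"
  using assms
proof (induction "card I" arbitrary: I hi rule: less_induct)
  case less
  show ?case
  proof (cases "I = {}")
    case True then show ?thesis using less.prems by simp
  next
    case False
    have mr: "Max (r ` I) \<in> r ` I" using less.prems(1) False by (intro Max_in) auto
    then obtain k where k1: "k \<in> I" "r k = Max (r ` I)" by auto
    have "\<forall>j\<in>I. r j \<le> r k" using k1 less.prems(1) by simp
    note k = k1(1) this
    let ?I' = "I - {k}"
    have others: "\<And>j. j \<in> ?I' \<Longrightarrow> r j \<le> l k"
    proof -
      fix j assume j: "j \<in> ?I'"
      have "r k \<le> l j \<or> r j \<le> l k" using less.prems(4)[of k j] k j by auto
      moreover have "l j < r j" using less.prems(3) j by auto
      moreover have "r j \<le> r k" using k j by auto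
      ultimately show "r j \<le> l k"
        using less.prems(3)[of k] k by (smt (verit))
    qed
    have card: "card ?I' < card I" using k(1) less.prems(1) by (rule card_Diff1_less[rotated])
    have IH: "(\<Sum>i\<in>?I'. r i - l i) \<le> l k - lo"
      using less.hyps[OF card, of "l k"] less.prems others k by auto
    have "(\<Sum>i\<in>I. r i - l i) = (r k - l k) + (\<Sum>i\<in>?I'. r i - l i)"
      using less.prems(1) k by (simp add: sum.remove)
    also have "\<dots> \<le> (r k - l k) + (l k - lo)" using IH by simp
    also have "\<dots> \<le> hi - lo" using less.prems(3)[of k] k by simp
    finally show ?thesis .
  qed
qed

lemma lb_generic:
  fixes l r lo :: "real \<Rightarrow> real" and \<rho> :: "real \<Rightarrow> real"
  assumes finP: "finite P" and finG: "finite G" and a: "1 \<le> a"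
    and rho0: "\<And>p. 0 \<le> \<rho> p"
    and lr: "\<And>d. d \<in> G \<Longrightarrow> l d < r d"
    and disj: "\<And>i j. i \<in> G \<Longrightarrow> j \<in> G \<Longrightarrow> i \<noteq> j \<Longrightarrow> r i \<le> l j \<or> r j \<le> l i"
    and wit: "\<And>d. d \<in> G \<Longrightarrow> \<exists>u\<in>P. lo u \<le> l d \<and> r d \<le> lo u + \<rho> u"
  shows "(\<Sum>d\<in>G. (r d - l d) powr a) \<le> (\<Sum>u\<in>P. \<rho> u powr a)"
proof -
  define w where "w d = (SOME u. u \<in> P \<and> lo u \<le> l d \<and> r d \<le> lo u + \<rho> u)" for d
  have w: "\<And>d. d \<in> G \<Longrightarrow> w d \<in> P \<and> lo (w d) \<le> l d \<and> r d \<le> lo (w d) + \<rho> (w d)"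
  proof -
    fix d assume d: "d \<in> G"
    then have ex: "\<exists>u. u \<in> P \<and> lo u \<le> l d \<and> r d \<le> lo u + \<rho> u" using wit by blast
    show "w d \<in> P \<and> lo (w d) \<le> l d \<and> r d \<le> lo (w d) + \<rho> (w d)"
      unfolding w_def by (rule someI_ex[OF ex])
  qed
  have img: "w ` G \<subseteq> P" using w by auto
  have "(\<Sum>d\<in>G. (r d - l d) powr a) = (\<Sum>u\<in>P. \<Sum>d\<in>{d\<in>G. w d = u}. (r d - l d) powr a)"
    by (rule sum.group[OF finG finP img, symmetric])
  also have "\<dots> \<le> (\<Sum>u\<in>P. \<rho> u powr a)"
  proof (rule sum_mono)
    fix u assume uP: "u \<in> P"
    let ?Gu = "{d\<in>G. w d = u}"
    have finGu: "finite ?Gu" using finG by simp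
    have "(\<Sum>d\<in>?Gu. (r d - l d) powr a) \<le> (\<Sum>d\<in>?Gu. r d - l d) powr a"
      using finGu lr a by (intro sum_powr_superadd) (auto simp: less_imp_le)
    also have "(\<Sum>d\<in>?Gu. r d - l d) \<le> (lo u + \<rho> u) - lo u"
    proof (rule intervals_sum[OF finGu])
      show "lo u \<le> lo u + \<rho> u" using rho0[of u] by simp
      show "\<And>i. i \<in> ?Gu \<Longrightarrow> lo u \<le> l i \<and> l i < r i \<and> r i \<le> lo u + \<rho> u"
        using w lr by blast
      show "\<And>i j. i \<in> ?Gu \<Longrightarrow> j \<in> ?Gu \<Longrightarrow> i \<noteq> j \<Longrightarrow> r i \<le> l j \<or> r j \<le> l i"
        using disj by blast
    qed
    then have "(\<Sum>d\<in>?Gu. r d - l d) powr a \<le> \<rho> u powr a"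
      using a lr by (intro powr_mono2) (auto intro: sum_nonneg simp: less_imp_le)
    finally show "(\<Sum>d\<in>?Gu. (r d - l d) powr a) \<le> \<rho> u powr a" .
  qed
  finally show ?thesis .
qed


definition osa :: "real list \<Rightarrow> real \<Rightarrow> real" where
  "osa ys p = snd (snd (run ys)) p - p"

definition alg :: algorithm where
  "alg s xs = (let R = osa (map (\<lambda>x. x - s) (filter (\<lambda>x. s < x) xs));
                   L = osa (map (\<lambda>x. s - x) (filter (\<lambda>x. x < s) xs)) in
     (\<lambda>p. if s < p then R (p - s) else if p < s then L (s - p) else max (R 0) (L 0)))"

definition gapsum :: "real \<Rightarrow> real set \<Rightarrow> real" where
  "gapsum a D = (\<Sum>d\<in>D - {Max D}. (nx D d - d) powr a)"

lemma run_state: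
  assumes "distinct ys" "\<forall>y\<in>set ys. 0 < y"
  obtains Ld tg where "run ys = (insert 0 (set ys), Ld, tg)" "Inv (insert 0 (set ys), Ld, tg)"
proof -
  obtain D Ld tg where r: "run ys = (D, Ld, tg)" by (cases "run ys") auto
  have "D = insert 0 (set ys)" using fst_run[of ys] r by simp
  moreover have "Inv (D, Ld, tg)" using Inv_run[OF assms] r by simp
  ultimately show ?thesis using that r by blast
qed

lemma osa_facts:
  assumes "distinct ys" "\<forall>y\<in>set ys. 0 < y"
  defines "D \<equiv> insert 0 (set ys)"
  shows "\<And>p. 0 \<le> osa ys p"
    and "\<And>p. p \<notin> D \<Longrightarrow> osa ys p = 0"
    and "\<And>q. q \<in> D \<Longrightarrow> 0 < q \<Longrightarrow> \<exists>v\<in>D. v < q \<and> q - v \<le> osa ys v"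
    and "\<And>a. 0 \<le> a \<Longrightarrow> (\<Sum>p\<in>D. osa ys p powr a) \<le> Kb a * gapsum a D"
    and "finite D" "\<And>p. p \<in> D \<Longrightarrow> 0 \<le> p" "0 \<in> D"
proof -
  obtain Ld tg where r: "run ys = (D, Ld, tg)" and I: "Inv (D, Ld, tg)"
    using run_state[OF assms(1,2)] unfolding D_def by blast
  have o: "\<And>p. osa ys p = tg p - p" unfolding osa_def r by simp
  show "\<And>p. 0 \<le> osa ys p" unfolding o using tg_ge[OF I] by simp
  show "\<And>p. p \<notin> D \<Longrightarrow> osa ys p = 0" unfolding o using InvD(7)[OF I] by simp
  show "\<And>q. q \<in> D \<Longrightarrow> 0 < q \<Longrightarrow> \<exists>v\<in>D. v < q \<and> q - v \<le> osa ys v"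
    unfolding o using cover[OF I] by fastforce
  show "\<And>a. 0 \<le> a \<Longrightarrow> (\<Sum>p\<in>D. osa ys p powr a) \<le> Kb a * gapsum a D"
    unfolding o gapsum_def using cost_bound[OF I] by simp
  show "finite D" "\<And>p. p \<in> D \<Longrightarrow> 0 \<le> p" "0 \<in> D" using InvD[OF I] by auto
qed

lemma osa_snoc: "\<exists>q. \<forall>p. p \<noteq> q \<longrightarrow> osa (ys @ [y]) p = osa ys p"
proof -
  obtain q v where "snd (snd (step y (run ys))) = (snd (snd (run ys)))(q := v)"
    using step_change by blast
  then show ?thesis unfolding osa_def run_snoc by auto
qed

lemma crossing:
  assumes "(x, y) \<in> E\<^sup>*" "x \<in> S" "y \<notin> S"
  shows "\<exists>u v. (u, v) \<in> E \<and> u \<in> S \<and> v \<notin> S"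
  using assms
proof (induction rule: rtrancl_induct)
  case base then show ?case by simp
next
  case (step y z)
  then show ?case by (cases "y \<in> S") auto
qed

definition ysR :: "real \<Rightarrow> real list \<Rightarrow> real list" where
  "ysR s xs = map (\<lambda>x. x - s) (filter (\<lambda>x. s < x) xs)"
definition ysL :: "real \<Rightarrow> real list \<Rightarrow> real list" where
  "ysL s xs = map (\<lambda>x. s - x) (filter (\<lambda>x. x < s) xs)"

lemma alg_eq: "alg s xs p = (if s < p then osa (ysR s xs) (p - s) else if p < s then osa (ysL s xs) (s - p)
     else max (osa (ysR s xs) 0) (osa (ysL s xs) 0))"
  unfolding alg_def ysR_def ysL_def Let_def by simp

lemma ys_ok:
  assumes "distinct xs"
  shows "distinct (ysR s xs)" "\<forall>y\<in>set (ysR s xs). 0 < y"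
    "distinct (ysL s xs)" "\<forall>y\<in>set (ysL s xs). 0 < y"
  using assms unfolding ysR_def ysL_def by (auto simp: distinct_map inj_on_def)

lemma DR_eq: "insert 0 (set (ysR s xs)) = (\<lambda>p. p - s) ` {p\<in>insert s (set xs). s \<le> p}"
  unfolding ysR_def by (force simp: image_iff)

lemma DL_eq: "insert 0 (set (ysL s xs)) = (\<lambda>p. s - p) ` {p\<in>insert s (set xs). p \<le> s}"
  unfolding ysL_def by (force simp: image_iff)

lemma alg_feasible:
  assumes v: "valid_insertion_seq s xs"
  shows "feasible s (insert s (set xs)) (alg s xs)"
proof -
  let ?P = "insert s (set xs)"
  let ?R = "osa (ysR s xs)" and ?L = "osa (ysL s xs)"
  let ?DR = "insert 0 (set (ysR s xs))" and ?DL = "insert 0 (set (ysL s xs))"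
  let ?\<rho> = "alg s xs"
  let ?E = "induced_edges ?P ?\<rho>"
  have dx: "distinct xs" using v unfolding valid_insertion_seq_def by simp
  note ok = ys_ok[OF dx, of s]
  note FR = osa_facts[OF ok(1,2)] and FL = osa_facts[OF ok(3,4)]
  have nonneg: "\<And>p. 0 \<le> ?\<rho> p"
  proof -
    fix p show "0 \<le> ?\<rho> p" unfolding alg_eq using FR(1)[of "p - s"] FL(1)[of "s - p"] FR(1)[of 0]
      by (simp only: if_split le_max_iff_disj) blast
  qed
  have zero: "\<And>p. p \<notin> ?P \<Longrightarrow> ?\<rho> p = 0"
  proof -
    fix p assume p: "p \<notin> ?P"
    have "p \<noteq> s" using p by auto
    moreover have "s < p \<Longrightarrow> p - s \<notin> ?DR" using p unfolding DR_eq by auto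
    moreover have "p < s \<Longrightarrow> s - p \<notin> ?DL" using p unfolding DL_eq by auto
    ultimately show "?\<rho> p = 0" unfolding alg_eq using FR(2) FL(2) by auto
  qed
  have inR: "\<And>d. d \<in> ?DR \<Longrightarrow> s + d \<in> ?P" unfolding DR_eq by auto
  have inL: "\<And>d. d \<in> ?DL \<Longrightarrow> s - d \<in> ?P" unfolding DL_eq by auto
  have rhoR: "\<And>v. v \<in> ?DR \<Longrightarrow> ?R v \<le> ?\<rho> (s + v)"
  proof -
    fix v assume "v \<in> ?DR"
    then have "0 \<le> v" using FR(6) by blast
    then show "?R v \<le> ?\<rho> (s + v)" unfolding alg_eq by (cases "v = 0") auto
  qed
  have rhoL: "\<And>v. v \<in> ?DL \<Longrightarrow> ?L v \<le> ?\<rho> (s - v)"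
  proof -
    fix v assume "v \<in> ?DL"
    then have "0 \<le> v" using FL(6) by blast
    then show "?L v \<le> ?\<rho> (s - v)" unfolding alg_eq by (cases "v = 0") auto
  qed
  have reachR: "\<forall>d\<in>?DR. (s, s + d) \<in> ?E\<^sup>*"
  proof (rule ccontr)
    assume "\<not> (\<forall>d\<in>?DR. (s, s + d) \<in> ?E\<^sup>*)"
    then have ne: "{d\<in>?DR. (s, s + d) \<notin> ?E\<^sup>*} \<noteq> {}" by auto
    define d0 where "d0 = Min {d\<in>?DR. (s, s + d) \<notin> ?E\<^sup>*}"
    have fin: "finite {d\<in>?DR. (s, s + d) \<notin> ?E\<^sup>*}" by simp
    have d0in: "d0 \<in> ?DR" "(s, s + d0) \<notin> ?E\<^sup>*" using Min_in[OF fin ne] unfolding d0_def by auto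
    have d0min: "\<And>d. d \<in> ?DR \<Longrightarrow> (s, s + d) \<notin> ?E\<^sup>* \<Longrightarrow> d0 \<le> d" unfolding d0_def using fin by simp
    have "d0 \<noteq> 0" using d0in by auto
    then have d0p: "0 < d0" using FR(6)[OF d0in(1)] by simp
    obtain v where v: "v \<in> ?DR" "v < d0" "d0 - v \<le> ?R v" using FR(3)[OF d0in(1) d0p] by blast
    have "(s, s + v) \<in> ?E\<^sup>*" using d0min[OF v(1)] v(2) by force
    moreover have "(s + v, s + d0) \<in> ?E"
      unfolding induced_edges_def using inR[OF v(1)] inR[OF d0in(1)] v rhoR[OF v(1)] by auto
    ultimately have "(s, s + d0) \<in> ?E\<^sup>*" by simp
    then show False using d0in by simp
  qed
  have reachL: "\<forall>d\<in>?DL. (s, s - d) \<in> ?E\<^sup>*"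
  proof (rule ccontr)
    assume "\<not> (\<forall>d\<in>?DL. (s, s - d) \<in> ?E\<^sup>*)"
    then have ne: "{d\<in>?DL. (s, s - d) \<notin> ?E\<^sup>*} \<noteq> {}" by auto
    define d0 where "d0 = Min {d\<in>?DL. (s, s - d) \<notin> ?E\<^sup>*}"
    have fin: "finite {d\<in>?DL. (s, s - d) \<notin> ?E\<^sup>*}" by simp
    have d0in: "d0 \<in> ?DL" "(s, s - d0) \<notin> ?E\<^sup>*" using Min_in[OF fin ne] unfolding d0_def by auto
    have d0min: "\<And>d. d \<in> ?DL \<Longrightarrow> (s, s - d) \<notin> ?E\<^sup>* \<Longrightarrow> d0 \<le> d" unfolding d0_def using fin by simp
    have "d0 \<noteq> 0" using d0in by auto
    then have d0p: "0 < d0" using FL(6)[OF d0in(1)] by simp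
    obtain v where v: "v \<in> ?DL" "v < d0" "d0 - v \<le> ?L v" using FL(3)[OF d0in(1) d0p] by blast
    have "(s, s - v) \<in> ?E\<^sup>*" using d0min[OF v(1)] v(2) by force
    moreover have "(s - v, s - d0) \<in> ?E"
      unfolding induced_edges_def using inL[OF v(1)] inL[OF d0in(1)] v rhoL[OF v(1)] by auto
    ultimately have "(s, s - d0) \<in> ?E\<^sup>*" by simp
    then show False using d0in by simp
  qed
  have reach: "\<forall>q\<in>?P. (s, q) \<in> ?E\<^sup>*"
  proof
    fix q assume q: "q \<in> ?P"
    show "(s, q) \<in> ?E\<^sup>*"
    proof (cases "s \<le> q")
      case True
      then have "q - s \<in> ?DR" unfolding DR_eq using q by auto
      then show ?thesis using reachR by force
    next
      case False
      then have "s - q \<in> ?DL" unfolding DL_eq using q by auto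
      then show ?thesis using reachL by force
    qed
  qed
  show ?thesis unfolding feasible_def range_assignment_def using nonneg zero reach by auto
qed

lemma alg_cost:
  assumes v: "valid_insertion_seq s xs" and a: "0 \<le> a"
  shows "cost a (insert s (set xs)) (alg s xs)
     \<le> Kb a * (gapsum a (insert 0 (set (ysR s xs))) + gapsum a (insert 0 (set (ysL s xs))))"
proof -
  let ?P = "insert s (set xs)"
  let ?R = "osa (ysR s xs)" and ?L = "osa (ysL s xs)"
  let ?DR = "insert 0 (set (ysR s xs))" and ?DL = "insert 0 (set (ysL s xs))"
  let ?\<rho> = "alg s xs"
  let ?f = "\<lambda>p. ?\<rho> p powr a"
  have dx: "distinct xs" using v unfolding valid_insertion_seq_def by simp
  note ok = ys_ok[OF dx, of s]
  note FR = osa_facts[OF ok(1,2)] and FL = osa_facts[OF ok(3,4)]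
  let ?PR = "{p\<in>?P. s < p}" and ?PL = "{p\<in>?P. p < s}"
  have Psplit: "?P = insert s (?PR \<union> ?PL)" by auto
  have sum1: "(\<Sum>p\<in>?P. ?f p) = ?f s + (\<Sum>p\<in>?PR. ?f p) + (\<Sum>p\<in>?PL. ?f p)"
  proof -
    have "(\<Sum>p\<in>?P. ?f p) = (\<Sum>p\<in>insert s (?PR \<union> ?PL). ?f p)"
      by (rule arg_cong[where f = "\<lambda>A. sum ?f A", OF Psplit])
    also have "\<dots> = ?f s + (\<Sum>p\<in>?PR \<union> ?PL. ?f p)" by (subst sum.insert) auto
    also have "(\<Sum>p\<in>?PR \<union> ?PL. ?f p) = (\<Sum>p\<in>?PR. ?f p) + (\<Sum>p\<in>?PL. ?f p)"
      by (rule sum.union_disjoint) auto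
    finally show ?thesis by simp
  qed
  have PR_img: "?PR = (\<lambda>d. s + d) ` (?DR - {0})" unfolding DR_eq by (force simp: image_iff)
  have PL_img: "?PL = (\<lambda>d. s - d) ` (?DL - {0})" unfolding DL_eq by (force simp: image_iff)
  have sR: "(\<Sum>p\<in>?PR. ?f p) = (\<Sum>d\<in>?DR - {0}. ?R d powr a)"
  proof -
    have "(\<Sum>p\<in>?PR. ?f p) = (\<Sum>d\<in>?DR - {0}. ?f (s + d))"
      unfolding PR_img by (subst sum.reindex) (auto simp: inj_on_def)
    also have "\<dots> = (\<Sum>d\<in>?DR - {0}. ?R d powr a)"
    proof (rule sum.cong)
      fix d assume d: "d \<in> ?DR - {0}"
      then have "0 < d" using FR(6)[of d] by force
      then show "?f (s + d) = ?R d powr a" unfolding alg_eq by simp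
    qed simp
    finally show ?thesis .
  qed
  have sL: "(\<Sum>p\<in>?PL. ?f p) = (\<Sum>d\<in>?DL - {0}. ?L d powr a)"
  proof -
    have "(\<Sum>p\<in>?PL. ?f p) = (\<Sum>d\<in>?DL - {0}. ?f (s - d))"
      unfolding PL_img by (subst sum.reindex) (auto simp: inj_on_def)
    also have "\<dots> = (\<Sum>d\<in>?DL - {0}. ?L d powr a)"
    proof (rule sum.cong)
      fix d assume d: "d \<in> ?DL - {0}"
      then have "0 < d" using FL(6)[of d] by force
      then show "?f (s - d) = ?L d powr a" unfolding alg_eq by simp
    qed simp
    finally show ?thesis .
  qed
  have fs: "?f s \<le> ?R 0 powr a + ?L 0 powr a"
  proof -
    have "?f s = max (?R 0) (?L 0) powr a" unfolding alg_eq by simp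
    also have "\<dots> \<le> ?R 0 powr a + ?L 0 powr a"
      by (cases "?R 0 \<le> ?L 0") (auto simp: max_def)
    finally show ?thesis .
  qed
  have DRs: "(\<Sum>d\<in>?DR. ?R d powr a) = ?R 0 powr a + (\<Sum>d\<in>?DR - {0}. ?R d powr a)"
    by (subst sum.remove[of _ 0]) auto
  have DLs: "(\<Sum>d\<in>?DL. ?L d powr a) = ?L 0 powr a + (\<Sum>d\<in>?DL - {0}. ?L d powr a)"
    by (subst sum.remove[of _ 0]) auto
  have "cost a ?P ?\<rho> = (\<Sum>p\<in>?P. ?f p)" unfolding cost_def by simp
  also have "\<dots> \<le> (\<Sum>d\<in>?DR. ?R d powr a) + (\<Sum>d\<in>?DL. ?L d powr a)"
    using sum1 sR sL fs DRs DLs by simp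
  also have "\<dots> \<le> Kb a * gapsum a ?DR + Kb a * gapsum a ?DL"
    using FR(4)[OF a] FL(4)[OF a] by (intro add_mono)
  finally show ?thesis by (simp add: distrib_left)
qed

lemma nx_le:
  assumes "finite D" "j \<in> D" "i < j"
  shows "nx D i \<le> j"
  unfolding nx_def using assms by (intro Min_le) auto

lemma opt_lb:
  assumes v: "valid_insertion_seq s xs" and a: "1 \<le> a"
    and f: "feasible s (insert s (set xs)) \<rho>"
  shows "gapsum a (insert 0 (set (ysR s xs))) \<le> cost a (insert s (set xs)) \<rho>"
    and "gapsum a (insert 0 (set (ysL s xs))) \<le> cost a (insert s (set xs)) \<rho>"
proof -
  let ?P = "insert s (set xs)"
  let ?DR = "insert 0 (set (ysR s xs))" and ?DL = "insert 0 (set (ysL s xs))"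
  let ?E = "induced_edges ?P \<rho>"
  have dx: "distinct xs" using v unfolding valid_insertion_seq_def by simp
  note ok = ys_ok[OF dx, of s]
  note FR = osa_facts[OF ok(1,2)] and FL = osa_facts[OF ok(3,4)]
  have finP: "finite ?P" by simp
  have rho0: "\<And>p. 0 \<le> \<rho> p" using f unfolding feasible_def range_assignment_def by simp
  have reach: "\<And>q. q \<in> ?P \<Longrightarrow> (s, q) \<in> ?E\<^sup>*" using f unfolding feasible_def by blast
  have cost_eq: "cost a ?P \<rho> = (\<Sum>u\<in>?P. \<rho> u powr a)" unfolding cost_def by simp
  show "gapsum a ?DR \<le> cost a ?P \<rho>"
  proof -
    let ?G = "?DR - {Max ?DR}"
    have "(\<Sum>d\<in>?G. ((s + nx ?DR d) - (s + d)) powr a) \<le> (\<Sum>u\<in>?P. \<rho> u powr a)"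
    proof (rule lb_generic[where lo = "\<lambda>u. u"])
      show "finite ?P" "finite ?G" "1 \<le> a" "\<And>p. 0 \<le> \<rho> p" using a rho0 by auto
      show "\<And>d. d \<in> ?G \<Longrightarrow> s + d < s + nx ?DR d" using nx_props[OF FR(5)] by auto
      show "\<And>i j. i \<in> ?G \<Longrightarrow> j \<in> ?G \<Longrightarrow> i \<noteq> j \<Longrightarrow> s + nx ?DR i \<le> s + j \<or> s + nx ?DR j \<le> s + i"
      proof -
        fix i j assume ij: "i \<in> ?G" "j \<in> ?G" "i \<noteq> j"
        show "s + nx ?DR i \<le> s + j \<or> s + nx ?DR j \<le> s + i"
        proof (cases "i < j")
          case True then show ?thesis using nx_le[OF FR(5), of j i] ij by simp
        next
          case False then have "j < i" using ij by simp
          then show ?thesis using nx_le[OF FR(5), of i j] ij by simp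
        qed
      qed
      show "\<And>d. d \<in> ?G \<Longrightarrow> \<exists>u\<in>?P. u \<le> s + d \<and> s + nx ?DR d \<le> u + \<rho> u"
      proof -
        fix d assume d: "d \<in> ?G"
        let ?e = "nx ?DR d"
        have e: "?e \<in> ?DR" "d < ?e" using nx_props[OF FR(5)] d by auto
        have d0: "0 \<le> d" using FR(6) d by auto
        have seP: "s + ?e \<in> ?P" using e(1) unfolding DR_eq by auto
        obtain u w where uw: "(u, w) \<in> ?E" "u \<in> {p. p \<le> s + d}" "w \<notin> {p. p \<le> s + d}"
          using crossing[OF reach[OF seP], of "{p. p \<le> s + d}"] d0 e(2) by auto
        have uP: "u \<in> ?P" and wP: "w \<in> ?P" and uwr: "\<bar>u - w\<bar> \<le> \<rho> u"
          using uw(1) unfolding induced_edges_def by auto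
        have "w - s \<in> ?DR" unfolding DR_eq using wP uw(3) d0 by (force simp: image_iff)
        then have "?e \<le> w - s" using nx_le[OF FR(5), of "w - s" d] uw(3) by simp
        then show "\<exists>u\<in>?P. u \<le> s + d \<and> s + ?e \<le> u + \<rho> u" using uP uw(2) uwr by (intro bexI[of _ u]) auto
      qed
    qed
    then show ?thesis unfolding gapsum_def cost_eq by simp
  qed
  show "gapsum a ?DL \<le> cost a ?P \<rho>"
  proof -
    let ?G = "?DL - {Max ?DL}"
    have "(\<Sum>d\<in>?G. ((s - d) - (s - nx ?DL d)) powr a) \<le> (\<Sum>u\<in>?P. \<rho> u powr a)"
    proof (rule lb_generic[where lo = "\<lambda>u. u - \<rho> u"])
      show "finite ?P" "finite ?G" "1 \<le> a" "\<And>p. 0 \<le> \<rho> p" using a rho0 by auto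
      show "\<And>d. d \<in> ?G \<Longrightarrow> s - nx ?DL d < s - d" using nx_props[OF FL(5)] by auto
      show "\<And>i j. i \<in> ?G \<Longrightarrow> j \<in> ?G \<Longrightarrow> i \<noteq> j \<Longrightarrow> s - i \<le> s - nx ?DL j \<or> s - j \<le> s - nx ?DL i"
      proof -
        fix i j assume ij: "i \<in> ?G" "j \<in> ?G" "i \<noteq> j"
        show "s - i \<le> s - nx ?DL j \<or> s - j \<le> s - nx ?DL i"
        proof (cases "i < j")
          case True then show ?thesis using nx_le[OF FL(5), of j i] ij by simp
        next
          case False then have "j < i" using ij by simp
          then show ?thesis using nx_le[OF FL(5), of i j] ij by simp
        qed
      qed
      show "\<And>d. d \<in> ?G \<Longrightarrow> \<exists>u\<in>?P. u - \<rho> u \<le> s - nx ?DL d \<and> s - d \<le> u - \<rho> u + \<rho> u"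
      proof -
        fix d assume d: "d \<in> ?G"
        let ?e = "nx ?DL d"
        have e: "?e \<in> ?DL" "d < ?e" using nx_props[OF FL(5)] d by auto
        have d0: "0 \<le> d" using FL(6) d by auto
        have seP: "s - ?e \<in> ?P" using e(1) unfolding DL_eq by auto
        obtain u w where uw: "(u, w) \<in> ?E" "u \<in> {p. s - d \<le> p}" "w \<notin> {p. s - d \<le> p}"
          using crossing[OF reach[OF seP], of "{p. s - d \<le> p}"] d0 e(2) by auto
        have uP: "u \<in> ?P" and wP: "w \<in> ?P" and uwr: "\<bar>u - w\<bar> \<le> \<rho> u"
          using uw(1) unfolding induced_edges_def by auto
        have "s - w \<in> ?DL" unfolding DL_eq using wP uw(3) d0 by (force simp: image_iff)
        then have "?e \<le> s - w" using nx_le[OF FL(5), of "s - w" d] uw(3) by simp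
        then show "\<exists>u\<in>?P. u - \<rho> u \<le> s - ?e \<and> s - d \<le> u - \<rho> u + \<rho> u"
          using uP uw(2) uwr by (intro bexI[of _ u]) auto
      qed
    qed
    then show ?thesis unfolding gapsum_def cost_eq by simp
  qed
qed

lemma alg_approx:
  assumes v: "valid_insertion_seq s xs" and a: "1 \<le> a"
  shows "cost a (insert s (set xs)) (alg s xs) \<le> 2 * Kb a * OPT a s (insert s (set xs))"
proof -
  let ?P = "insert s (set xs)"
  let ?X = "{cost a ?P \<rho> | \<rho>. feasible s ?P \<rho>}"
  have ne: "?X \<noteq> {}" using alg_feasible[OF v] by blast
  have gR: "gapsum a (insert 0 (set (ysR s xs))) \<le> OPT a s ?P"
    unfolding OPT_def by (rule cInf_greatest[OF ne]) (use opt_lb(1)[OF v a] in blast)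
  have gL: "gapsum a (insert 0 (set (ysL s xs))) \<le> OPT a s ?P"
    unfolding OPT_def by (rule cInf_greatest[OF ne]) (use opt_lb(2)[OF v a] in blast)
  have "cost a ?P (alg s xs) \<le> Kb a * (gapsum a (insert 0 (set (ysR s xs))) + gapsum a (insert 0 (set (ysL s xs))))"
    using alg_cost[OF v] a by simp
  also have "\<dots> \<le> Kb a * (OPT a s ?P + OPT a s ?P)"
    using gR gL Kb_pos[of a] by (intro mult_left_mono) auto
  finally show ?thesis by simp
qed

lemma alg_stable:
  assumes v: "valid_insertion_seq s (xs @ [x])"
  shows "card {p. alg s (xs @ [x]) p \<noteq> alg s xs p} \<le> 1"
proof -
  have xs: "x \<noteq> s" using v unfolding valid_insertion_seq_def by auto
  have "\<exists>z. {p. alg s (xs @ [x]) p \<noteq> alg s xs p} \<subseteq> {z}"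
  proof (cases "s < x")
    case True
    have r: "ysR s (xs @ [x]) = ysR s xs @ [x - s]" and l: "ysL s (xs @ [x]) = ysL s xs"
      using True unfolding ysR_def ysL_def by auto
    obtain q where q: "\<forall>p. p \<noteq> q \<longrightarrow> osa (ysR s xs @ [x - s]) p = osa (ysR s xs) p"
      using osa_snoc by blast
    have "{p. alg s (xs @ [x]) p \<noteq> alg s xs p} \<subseteq> {s + q}"
    proof
      fix p assume p: "p \<in> {p. alg s (xs @ [x]) p \<noteq> alg s xs p}"
      show "p \<in> {s + q}"
      proof (rule ccontr)
        assume "p \<notin> {s + q}"
        then have pq: "p - s \<noteq> q" by auto
        have "alg s (xs @ [x]) p = alg s xs p"
        proof (cases "s < p")
          case True then show ?thesis unfolding alg_eq r l using q pq by simp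
        next
          case False
          show ?thesis
          proof (cases "p < s")
            case True then show ?thesis unfolding alg_eq r l by simp
          next
            case False
            then have "p = s" using \<open>\<not> s < p\<close> by simp
            then have "q \<noteq> 0" using pq by simp
            then show ?thesis unfolding alg_eq r l using q \<open>p = s\<close> by simp
          qed
        qed
        then show False using p by simp
      qed
    qed
    then show ?thesis by blast
  next
    case False
    then have xl: "x < s" using xs by simp
    have r: "ysR s (xs @ [x]) = ysR s xs" and l: "ysL s (xs @ [x]) = ysL s xs @ [s - x]"
      using xl unfolding ysR_def ysL_def by auto
    obtain q where q: "\<forall>p. p \<noteq> q \<longrightarrow> osa (ysL s xs @ [s - x]) p = osa (ysL s xs) p"
      using osa_snoc by blast
    have "{p. alg s (xs @ [x]) p \<noteq> alg s xs p} \<subseteq> {s - q}"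
    proof
      fix p assume p: "p \<in> {p. alg s (xs @ [x]) p \<noteq> alg s xs p}"
      show "p \<in> {s - q}"
      proof (rule ccontr)
        assume "p \<notin> {s - q}"
        then have pq: "s - p \<noteq> q" by auto
        have "alg s (xs @ [x]) p = alg s xs p"
        proof (cases "s < p")
          case True then show ?thesis unfolding alg_eq r l by simp
        next
          case False
          show ?thesis
          proof (cases "p < s")
            case True then show ?thesis unfolding alg_eq r l using q pq by simp
          next
            case False
            then have "p = s" using \<open>\<not> s < p\<close> by simp
            then have "q \<noteq> 0" using pq by simp
            then show ?thesis unfolding alg_eq r l using q \<open>p = s\<close> by simp
          qed
        qed
        then show False using p by simp
      qed
    qed
    then show ?thesis by blast
  qed
  then obtain z where z: "{p. alg s (xs @ [x]) p \<noteq> alg s xs p} \<subseteq> {z}" by blast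
  have "card {p. alg s (xs @ [x]) p \<noteq> alg s xs p} \<le> card {z}" by (rule card_mono[OF _ z]) simp
  then show ?thesis by simp
qed

lemma alg_stable_approx:
  assumes a: "1 \<le> a"
  shows "stable_approx a (2 * Kb a) alg"
  unfolding stable_approx_def using alg_feasible alg_approx[OF _ a] alg_stable by blast

theorem theorem8:
  shows "(\<forall>\<alpha>::real. \<alpha> > 1 \<longrightarrow> (\<exists>c::real. \<exists>A. stable_approx \<alpha> c A))
         \<and> (\<exists>A. stable_approx 2 (2 * (3 + sqrt 5)) A)"
proof
  show "\<forall>\<alpha>::real. \<alpha> > 1 \<longrightarrow> (\<exists>c::real. \<exists>A. stable_approx \<alpha> c A)"
    using alg_stable_approx by (meson less_imp_le)
  have "stable_approx 2 (2 * Kb 2) alg" by (rule alg_stable_approx) simp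
  then show "\<exists>A. stable_approx 2 (2 * (3 + sqrt 5)) A" unfolding Kb_def by auto
qed


end
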